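(* Let $\mathbf{u}=(u_1,\dots,u_n)$ be a utility profile over $C$, $|C|=m$, and let $R\in\{R^C,R^V\}$. The game $G=(\mathcal{L},R,\mathbf{u})$ admits a PNE if and only if one of the following conditions holds: (1) all voters rank some candidate $c_j$ first; (2) each candidate is ranked first by at most one voter, and moreover $\frac{1}{n}\sum_{i\in N}u_\ell(a_i)\ge\max_{i\in N\setminus\{\ell\}}u_\ell(a_i)$ for each $\ell\in N$; (3) there exists a set of candidates $X=\{c_{\ell_1},\dots,c_{\ell_k}\}$ with $2\le k\le\min(n/2,m)$ and a partition of the voters into $k$ groups $N_1,\dots,N_k$ of size $n/k$ each such that for each $j\in[k]$ and each $i\in N_j$ we have $c_{\ell_j}\succ_i c$ for all $c\in X\setminus\{c_{\ell_j}\}$, and moreover $\frac{1}{k}\sum_{c\in X}u_i(c)\ge\max_{c\in X\setminus\{c_{\ell_j}\}}u_i(c)$. Further, if condition (1) holds for some $c_j\in C$, then if $R=R^C$, for each $i\in N$ the game $G$ has a PNE where $i$ votes for $c_j$ and all other voters abstain, whereas if $R=R^V$ the game $G$ has a PNE where all voters abstain; if condition (2) holds, then $G$ has a PNE where each voter votes for her top candidate; and if condition (3) holds for some set $X$, then $G$ has a PNE where each voter votes for her favorite candidate in $X$. The game $G$ has no other PNE.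
   Context: Let $C=\{c_1,\dots,c_m\}$ be a set of candidates and $N=\{1,\dots,n\}$ a set of voters; $[k]=\{1,\dots,k\}$. Each voter $i$ has an injective utility function $u_i:C\to\mathbb{N}$; $\mathbf{u}=(u_1,\dots,u_n)$. Voter $i$'s preference $\succ_i$ is $c\succ_i c'$ iff $u_i(c)>u_i(c')$; $a_i$ is $i$'s top candidate. A ballot vector is $\mathbf{b}=(b_1,\dots,b_n)$ with $b_i\in C\cup\{\bot\}$ ($\bot$ = abstain). $(\mathbf{b}_{-i},b')$ denotes $\mathbf{b}$ with $b_i$ replaced by $b'$. $\mathrm{sc}(c,\mathbf{b})=|\{i:b_i=c\}|$, $M(\mathbf{b})=\max_c\mathrm{sc}(c,\mathbf{b})$, $W(\mathbf{b})=\{c:\mathrm{sc}(c,\mathbf{b})=M(\mathbf{b})\}$ (equal to $C$ if all abstain). If $|W(\mathbf{b})|=1$ its element wins; otherwise: under $R^C$ the winner is chosen uniformly at random from $W(\mathbf{b})$; under $R^V$ a voter $i\in N$ is chosen uniformly at random, and the winner is $b_i$ if $b_i\in W(\mathbf{b})$ and otherwise $i$'s most preferred candidate in $W(\mathbf{b})$. Let $p^X_j(\mathbf{b})$ denote the probability that $c_j$ wins under $R^X$. Fix $0<\varepsilon<\min\{1/m,1/n\}$. In the lazy setting $\mathcal{L}$, voter $i$'s utility is $U_i(\mathbf{b})=\sum_j p^X_j(\mathbf{b})u_i(c_j)$ if $b_i\in C$ and $\sum_j p^X_j(\mathbf{b})u_i(c_j)+\varepsilon$ if $b_i=\bot$.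 The game $(\mathcal{L},R,\mathbf{u})$ has players $N$, action sets $C\cup\{\bot\}$. A PNE is a ballot vector $\mathbf{b}$ with $U_i(\mathbf{b})\ge U_i(\mathbf{b}_{-i},b')$ for all $i\in N$ and all $b'\in C\cup\{\bot\}$. *)

theory Defs
  imports Complex_Main
begin

text \<open>Voting rules: R^C (random candidate tie-breaking) and R^V (random voter tie-breaking).\<close>
datatype rule = RC | RV

text \<open>Ballots: None = abstain (bottom), Some c = vote for c.\<close>

definition sc :: "'v set \<Rightarrow> ('v \<Rightarrow> 'c option) \<Rightarrow> 'c \<Rightarrow> nat" where
  "sc N b c = card {i \<in> N. b i = Some c}"

definition Wset :: "'v set \<Rightarrow> 'c set \<Rightarrow> ('v \<Rightarrow> 'c option) \<Rightarrow> 'c set" where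
  "Wset N C b = {c \<in> C. sc N b c = Max (sc N b ` C)}"

text \<open>Voter i's most preferred candidate in S (well defined for injective utilities).\<close>
definition fav :: "('v \<Rightarrow> 'c \<Rightarrow> nat) \<Rightarrow> 'v \<Rightarrow> 'c set \<Rightarrow> 'c" where
  "fav u i S = (THE c. c \<in> S \<and> (\<forall>d\<in>S. d \<noteq> c \<longrightarrow> u i d < u i c))"

text \<open>Outcome under R^V when voter i is drawn.\<close>
definition vpick :: "('v \<Rightarrow> 'c \<Rightarrow> nat) \<Rightarrow> 'v set \<Rightarrow> 'c set \<Rightarrow> ('v \<Rightarrow> 'c option) \<Rightarrow> 'v \<Rightarrow> 'c" where
  "vpick u N C b i = (case b i of
      Some d \<Rightarrow> (if d \<in> Wset N C b then d else fav u i (Wset N C b))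
    | None \<Rightarrow> fav u i (Wset N C b))"

definition winprob :: "rule \<Rightarrow> ('v \<Rightarrow> 'c \<Rightarrow> nat) \<Rightarrow> 'v set \<Rightarrow> 'c set \<Rightarrow> ('v \<Rightarrow> 'c option) \<Rightarrow> 'c \<Rightarrow> real" where
  "winprob R u N C b c =
    (if card (Wset N C b) = 1 then (if c \<in> Wset N C b then 1 else 0)
     else (case R of
       RC \<Rightarrow> (if c \<in> Wset N C b then 1 / real (card (Wset N C b)) else 0)
     | RV \<Rightarrow> real (card {i \<in> N. vpick u N C b i = c}) / real (card N)))"

definition lazy_util :: "rule \<Rightarrow> ('v \<Rightarrow> 'c \<Rightarrow> nat) \<Rightarrow> 'v set \<Rightarrow> 'c set \<Rightarrow> real \<Rightarrow> ('v \<Rightarrow> 'c option) \<Rightarrow> 'v \<Rightarrow> real" where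
  "lazy_util R u N C \<epsilon> b i =
    (\<Sum>c\<in>C. winprob R u N C b c * real (u i c)) + (if b i = None then \<epsilon> else 0)"

definition ballots :: "'v set \<Rightarrow> 'c set \<Rightarrow> ('v \<Rightarrow> 'c option) set" where
  "ballots N C = {b. (\<forall>i\<in>N. b i \<in> insert None (Some ` C)) \<and> (\<forall>i. i \<notin> N \<longrightarrow> b i = None)}"

definition is_PNE :: "rule \<Rightarrow> ('v \<Rightarrow> 'c \<Rightarrow> nat) \<Rightarrow> 'v set \<Rightarrow> 'c set \<Rightarrow> real \<Rightarrow> ('v \<Rightarrow> 'c option) \<Rightarrow> bool" where
  "is_PNE R u N C \<epsilon> b \<longleftrightarrow> b \<in> ballots N C \<and>
     (\<forall>i\<in>N. \<forall>x\<in>insert None (Some ` C).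
        lazy_util R u N C \<epsilon> (b(i := x)) i \<le> lazy_util R u N C \<epsilon> b i)"

definition cond1 :: "('v \<Rightarrow> 'c \<Rightarrow> nat) \<Rightarrow> 'v set \<Rightarrow> 'c set \<Rightarrow> 'c \<Rightarrow> bool" where
  "cond1 u N C c \<longleftrightarrow> c \<in> C \<and> (\<forall>i\<in>N. fav u i C = c)"

definition cond2 :: "('v \<Rightarrow> 'c \<Rightarrow> nat) \<Rightarrow> 'v set \<Rightarrow> 'c set \<Rightarrow> bool" where
  "cond2 u N C \<longleftrightarrow> inj_on (\<lambda>i. fav u i C) N \<and>
     (\<forall>l\<in>N. real (\<Sum>i\<in>N. u l (fav u i C)) / real (card N)
              \<ge> real (Max ((\<lambda>i. u l (fav u i C)) ` (N - {l}))))"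

text \<open>Condition (3) for the candidate set X; the partition N_1..N_k is given by g : N \<rightarrow> X
  (N_j = voters mapped to c_{l_j}).\<close>
definition cond3 :: "('v \<Rightarrow> 'c \<Rightarrow> nat) \<Rightarrow> 'v set \<Rightarrow> 'c set \<Rightarrow> 'c set \<Rightarrow> bool" where
  "cond3 u N C X \<longleftrightarrow> X \<subseteq> C \<and> 2 \<le> card X \<and> 2 * card X \<le> card N \<and> card X \<le> card C \<and>
     (\<exists>g. (\<forall>i\<in>N. g i \<in> X) \<and>
          (\<forall>c\<in>X. card {i \<in> N. g i = c} * card X = card N) \<and>
          (\<forall>i\<in>N. \<forall>c\<in>X - {g i}. u i c < u i (g i)) \<and>
          (\<forall>i\<in>N. real (\<Sum>c\<in>X. u i c) / real (card X) \<ge> real (Max (u i ` (X - {g i})))))"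

end

theory Submission
  imports Defs
begin


lemma fav_eq:
  fixes u :: "'v \<Rightarrow> 'c \<Rightarrow> nat"
  assumes "c \<in> S" "\<forall>d\<in>S. d \<noteq> c \<longrightarrow> u i d < u i c"
  shows "fav u i S = c"
  unfolding fav_def
proof (rule the_equality)
  show "c \<in> S \<and> (\<forall>d\<in>S. d \<noteq> c \<longrightarrow> u i d < u i c)" using assms by blast
  fix x assume "x \<in> S \<and> (\<forall>d\<in>S. d \<noteq> x \<longrightarrow> u i d < u i x)"
  show "x = c"
  proof (rule ccontr)
    assume "x \<noteq> c"
    hence "u i x < u i c" "u i c < u i x" using assms \<open>x \<in> S \<and> _\<close> by auto
    thus False by simp
  qed
qed

lemma fav_ex:
  fixes u :: "'v \<Rightarrow> 'c \<Rightarrow> nat"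
  assumes "finite S" "S \<noteq> {}" "inj_on (u i) S"
  shows "fav u i S \<in> S \<and> (\<forall>d\<in>S. d \<noteq> fav u i S \<longrightarrow> u i d < u i (fav u i S))"
proof -
  obtain c where c: "c \<in> S" "\<forall>d\<in>S. u i d \<le> u i c"
  proof -
    have "Max (u i ` S) \<in> u i ` S" using assms by simp
    then obtain c where "c \<in> S" "u i c = Max (u i ` S)" by auto
    moreover have "\<forall>d\<in>S. u i d \<le> Max (u i ` S)" using assms by simp
    ultimately show ?thesis using that by simp
  qed
  have c2: "\<forall>d\<in>S. d \<noteq> c \<longrightarrow> u i d < u i c"
    using c assms(3) unfolding inj_on_def by (meson le_neq_implies_less)
  have "fav u i S = c" using c(1) c2 by (rule fav_eq)
  thus ?thesis using c c2 by simp
qed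


lemma Wset_eq:
  fixes b :: "'v \<Rightarrow> 'c option"
  assumes "finite C" "S \<subseteq> C" "S \<noteq> {}" "\<forall>c\<in>S. sc N b c = M" "\<forall>c\<in>C - S. sc N b c < M"
  shows "Wset N C b = S"
proof -
  have mx: "Max (sc N b ` C) = M"
  proof (rule Max_eqI)
    show "finite (sc N b ` C)" using assms by simp
    show "y \<le> M" if "y \<in> sc N b ` C" for y
    proof -
      obtain c where "c \<in> C" "y = sc N b c" using \<open>y \<in> _\<close> by auto
      show ?thesis
      proof (cases "c \<in> S")
        case True thus ?thesis using assms(4) \<open>y = _\<close> by simp
      next
        case False
        hence "sc N b c < M" using assms(5) \<open>c \<in> C\<close> by blast
        thus ?thesis using \<open>y = _\<close> by simp
      qed
    qed
    obtain c where "c \<in> S" using assms(3) by blast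
    hence "c \<in> C" "sc N b c = M" using assms(2,4) by auto
    thus "M \<in> sc N b ` C" by (metis image_eqI)
  qed
  have h5: "\<And>c. c\<in>C \<Longrightarrow> c\<notin>S \<Longrightarrow> sc N b c < M" using assms(5) by blast
  show ?thesis unfolding Wset_def mx
  proof (intro set_eqI iffI)
    fix x assume "x \<in> {c\<in>C. sc N b c = M}"
    hence "x \<in> C" "sc N b x = M" by auto
    thus "x \<in> S" using h5 by (metis less_irrefl)
  next
    fix x assume "x \<in> S"
    thus "x \<in> {c\<in>C. sc N b c = M}" using assms(2,4) by auto
  qed
qed

lemma Wset_sub: "Wset N C b \<subseteq> C" unfolding Wset_def by auto

lemma Wset_ne: assumes "finite C" "C \<noteq> {}" shows "Wset N C b \<noteq> {}"
proof -
  have "Max (sc N b ` C) \<in> sc N b ` C" using assms by simp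
  thus ?thesis unfolding Wset_def by auto
qed

lemma Wset_max: assumes "finite C" "c \<in> C" "d \<in> Wset N C b" shows "sc N b c \<le> sc N b d"
  using assms unfolding Wset_def by auto

lemma sc_upd:
  fixes b :: "'v \<Rightarrow> 'c option"
  assumes "finite N" "i \<in> N"
  shows "sc N (b(i:=x)) c + (if b i = Some c then 1 else 0) = sc N b c + (if x = Some c then 1 else 0)"
proof -
  let ?R = "{j\<in>N-{i}. b j = Some c}"
  have f: "finite ?R" "i \<notin> ?R" using assms by auto
  have e1: "{j\<in>N. (b(i:=x)) j = Some c} = (if x = Some c then insert i ?R else ?R)"
    using assms by auto
  have e2: "{j\<in>N. b j = Some c} = (if b i = Some c then insert i ?R else ?R)"
    using assms by auto
  show ?thesis unfolding sc_def e1 e2 using f by auto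
qed

lemma fiber_sum:
  fixes h :: "'v \<Rightarrow> 'c" and f :: "'c \<Rightarrow> real"
  assumes "finite N" "finite S" "\<forall>l\<in>N. h l \<in> S"
  shows "(\<Sum>l\<in>N. f (h l)) = (\<Sum>c\<in>S. real (card {l\<in>N. h l = c}) * f c)"
proof -
  have "(\<Sum>l\<in>N. f (h l)) = (\<Sum>l\<in>N. \<Sum>c\<in>S. if h l = c then f c else 0)"
  proof (rule sum.cong)
    fix l assume "l \<in> N"
    hence "h l \<in> S" using assms by blast
    thus "f (h l) = (\<Sum>c\<in>S. if h l = c then f c else 0)"
      using sum.delta'[OF assms(2), of "h l" f] by simp
  qed simp
  also have "\<dots> = (\<Sum>c\<in>S. \<Sum>l\<in>N. if h l = c then f c else 0)" by (rule sum.swap)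
  also have "\<dots> = (\<Sum>c\<in>S. real (card {l\<in>N. h l = c}) * f c)"
  proof (rule sum.cong)
    fix c assume "c \<in> S"
    have "(\<Sum>l\<in>N. if h l = c then f c else 0) = (\<Sum>l\<in>{l\<in>N. h l = c}. f c)"
      using sum.inter_filter[OF assms(1), of "\<lambda>_. f c" "\<lambda>l. h l = c"] by simp
    thus "(\<Sum>l\<in>N. if h l = c then f c else 0) = real (card {l\<in>N. h l = c}) * f c" by simp
  qed simp
  finally show ?thesis .
qed

lemma sum_le_strict_nat:
  fixes f :: "'a \<Rightarrow> nat"
  assumes "finite A" "\<forall>x\<in>A. f x \<le> t" "y \<in> A" "f y < t"
  shows "sum f A + 1 \<le> card A * t"
proof -
  have s: "sum f A = f y + sum f (A - {y})" using assms(1,3) by (rule sum.remove)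
  have b: "sum f (A - {y}) \<le> card (A - {y}) * t"
  proof -
    have "\<And>i. i \<in> A - {y} \<Longrightarrow> f i \<le> t" using assms(2) by blast
    from sum_bounded_above[OF this] show ?thesis by (simp only: of_nat_id)
  qed
  have c: "card A = Suc (card (A - {y}))" using assms(1,3) by (rule card.remove)
  have "sum f A + 1 \<le> t + card (A - {y}) * t" using s b assms(4) by linarith
  thus ?thesis using c by simp
qed


definition EU :: "rule \<Rightarrow> ('v \<Rightarrow> 'c \<Rightarrow> nat) \<Rightarrow> 'v set \<Rightarrow> 'c set \<Rightarrow> ('v \<Rightarrow> 'c option) \<Rightarrow> 'v \<Rightarrow> real" where
  "EU R u N C b i = (\<Sum>c\<in>C. winprob R u N C b c * real (u i c))"

lemma lazy_EU: "lazy_util R u N C \<epsilon> b i = EU R u N C b i + (if b i = None then \<epsilon> else 0)"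
  by (simp add: lazy_util_def EU_def)

locale vs =
  fixes N :: "'v set" and C :: "'c set" and u :: "'v \<Rightarrow> 'c \<Rightarrow> nat" and \<epsilon> :: real
  assumes finN: "finite N" and finC: "finite C" and n2: "card N \<ge> 2" and m2: "card C \<ge> 2"
    and inj: "\<forall>i\<in>N. inj_on (u i) C" and epos: "0 < \<epsilon>"
    and em: "\<epsilon> < 1 / real (card C)" and en: "\<epsilon> < 1 / real (card N)"
begin

lemma Cne: "C \<noteq> {}" using m2 by auto
lemma Nne: "N \<noteq> {}" using n2 by auto

lemma fav_prop:
  assumes "S \<subseteq> C" "S \<noteq> {}" "i \<in> N"
  shows "fav u i S \<in> S" "\<And>d. d \<in> S \<Longrightarrow> d \<noteq> fav u i S \<Longrightarrow> u i d < u i (fav u i S)"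
proof -
  have f: "finite S" using assms finC finite_subset by blast
  have j: "inj_on (u i) S" using inj assms inj_on_subset by blast
  have "fav u i S \<in> S \<and> (\<forall>d\<in>S. d \<noteq> fav u i S \<longrightarrow> u i d < u i (fav u i S))"
    by (rule fav_ex[where u=u and i=i and S=S, OF f assms(2) j])
  thus "fav u i S \<in> S" "\<And>d. d \<in> S \<Longrightarrow> d \<noteq> fav u i S \<Longrightarrow> u i d < u i (fav u i S)" by auto
qed

lemma fav_ge:
  assumes "S \<subseteq> C" "d \<in> S" "i \<in> N"
  shows "u i d \<le> u i (fav u i S)"
  using fav_prop[OF assms(1) _ assms(3)] assms(2) by (cases "d = fav u i S") (auto intro: less_imp_le)

lemma W_ne: "Wset N C b \<noteq> {}" using Wset_ne[OF finC Cne] .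

lemma W_fin: "finite (Wset N C b)" by (rule finite_subset[OF Wset_sub finC])

lemma vpick_in:
  assumes "j \<in> N" shows "vpick u N C b j \<in> Wset N C b"
proof -
  have f: "fav u j (Wset N C b) \<in> Wset N C b" by (rule fav_prop(1)[OF Wset_sub W_ne assms])
  show ?thesis unfolding vpick_def using f by (cases "b j") auto
qed

lemma vpick_C: "j \<in> N \<Longrightarrow> vpick u N C b j \<in> C"
  using vpick_in[of j b] Wset_sub[of N C b] by auto

lemma EU_single:
  assumes "Wset N C b = {c}" shows "EU R u N C b i = real (u i c)"
proof -
  have "c \<in> C" using Wset_sub[of N C b] assms by auto
  have "EU R u N C b i = (\<Sum>x\<in>C. (if x = c then 1 else 0) * real (u i x))"
    unfolding EU_def winprob_def assms by simp
  also have "\<dots> = (\<Sum>x\<in>C. if x = c then real (u i x) else 0)" by (rule sum.cong) auto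
  also have "\<dots> = real (u i c)" using sum.delta[OF finC, of c "\<lambda>x. real (u i x)"] \<open>c \<in> C\<close> by simp
  finally show ?thesis .
qed

lemma EU_RC:
  assumes "card (Wset N C b) \<noteq> 1"
  shows "EU RC u N C b i = (\<Sum>c\<in>Wset N C b. real (u i c)) / real (card (Wset N C b))"
proof -
  let ?W = "Wset N C b"
  have "EU RC u N C b i = (\<Sum>x\<in>C. if x \<in> ?W then real (u i x) / real (card ?W) else 0)"
    unfolding EU_def winprob_def using assms by (intro sum.cong) auto
  also have "\<dots> = (\<Sum>x\<in>{x\<in>C. x \<in> ?W}. real (u i x) / real (card ?W))"
    using sum.inter_filter[OF finC, of "\<lambda>x. real (u i x) / real (card ?W)" "\<lambda>x. x \<in> ?W"] by simp
  also have "{x\<in>C. x \<in> ?W} = ?W" using Wset_sub[of N C b] by auto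
  finally show ?thesis by (simp add: sum_divide_distrib)
qed

lemma EU_RV:
  assumes "card (Wset N C b) \<noteq> 1"
  shows "EU RV u N C b i = (\<Sum>j\<in>N. real (u i (vpick u N C b j))) / real (card N)"
proof -
  have h: "\<forall>l\<in>N. vpick u N C b l \<in> C" using vpick_in[of _ b] Wset_sub[of N C b] by auto
  have "EU RV u N C b i = (\<Sum>x\<in>C. real (card {j\<in>N. vpick u N C b j = x}) * real (u i x) / real (card N))"
    unfolding EU_def winprob_def using assms by (intro sum.cong) auto
  also have "\<dots> = (\<Sum>x\<in>C. real (card {j\<in>N. vpick u N C b j = x}) * real (u i x)) / real (card N)"
    by (simp add: sum_divide_distrib)
  also have "(\<Sum>x\<in>C. real (card {j\<in>N. vpick u N C b j = x}) * real (u i x)) = (\<Sum>j\<in>N. real (u i (vpick u N C b j)))"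
    using fiber_sum[OF finN finC h, of "\<lambda>x. real (u i x)"] by simp
  finally show ?thesis .
qed

lemma EU_RC_any:
  "EU RC u N C b i = (\<Sum>c\<in>Wset N C b. real (u i c)) / real (card (Wset N C b))"
proof (cases "card (Wset N C b) = 1")
  case True
  then obtain c where c: "Wset N C b = {c}" by (rule card_1_singletonE)
  show ?thesis unfolding EU_single[OF c] c by simp
next
  case False thus ?thesis by (rule EU_RC)
qed

lemma EU_RV_any:
  "EU RV u N C b i = (\<Sum>j\<in>N. real (u i (vpick u N C b j))) / real (card N)"
proof (cases "card (Wset N C b) = 1")
  case True
  then obtain c where c: "Wset N C b = {c}" by (rule card_1_singletonE)
  have "\<forall>j\<in>N. vpick u N C b j = c" using vpick_in[of _ b] c by auto
  hence "(\<Sum>j\<in>N. real (u i (vpick u N C b j))) = (\<Sum>j\<in>N. real (u i c))" by simp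
  moreover have "real (card N) \<noteq> 0" using n2 by simp
  ultimately show ?thesis unfolding EU_single[OF c] by simp
next
  case False thus ?thesis by (rule EU_RV)
qed

lemma EU_allvote:
  assumes "\<forall>l\<in>N. b l = Some (h l) \<and> h l \<in> Wset N C b"
  shows "EU R u N C b i = (\<Sum>l\<in>N. real (u i (h l))) / real (card N)"
proof (cases R)
  case RV
  have "(\<Sum>j\<in>N. real (u i (vpick u N C b j))) = (\<Sum>l\<in>N. real (u i (h l)))"
  proof (rule sum.cong)
    fix l assume "l \<in> N" thus "real (u i (vpick u N C b l)) = real (u i (h l))"
      using assms(1) unfolding vpick_def by auto
  qed simp
  thus ?thesis using EU_RV_any[of b i] RV by simp
next
  case RC
  let ?W = "Wset N C b" and ?M = "Max (sc N b ` C)"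
  have fib: "card {l\<in>N. h l = c} = ?M" if "c \<in> ?W" for c
  proof -
    have "{l\<in>N. h l = c} = {l\<in>N. b l = Some c}" using assms(1) by auto
    thus ?thesis using that unfolding Wset_def sc_def by auto
  qed
  have hW: "\<forall>l\<in>N. h l \<in> ?W" using assms(1) by auto
  have s1: "(\<Sum>l\<in>N. real (u i (h l))) = real ?M * (\<Sum>c\<in>?W. real (u i c))"
  proof -
    have "(\<Sum>l\<in>N. real (u i (h l))) = (\<Sum>c\<in>?W. real (card {l\<in>N. h l = c}) * real (u i c))"
      by (rule fiber_sum[OF finN W_fin hW])
    also have "\<dots> = (\<Sum>c\<in>?W. real ?M * real (u i c))" by (rule sum.cong) (simp_all add: fib)
    finally show ?thesis by (simp add: sum_distrib_left)
  qed
  have s2: "real (card N) = real ?M * real (card ?W)"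
  proof -
    have "(\<Sum>l\<in>N. (\<lambda>c. 1::real) (h l)) = (\<Sum>c\<in>?W. real (card {l\<in>N. h l = c}) * 1)"
      by (rule fiber_sum[OF finN W_fin hW])
    also have "\<dots> = (\<Sum>c\<in>?W. real ?M)" by (rule sum.cong) (simp_all add: fib)
    finally show ?thesis by simp
  qed
  have "real ?M \<noteq> 0"
  proof
    assume "real ?M = 0" hence "real (card N) = 0" using s2 by simp
    thus False using n2 by simp
  qed
  thus ?thesis using EU_RC_any[of b i] RC s1 s2 by simp
qed

end


lemma avg_bound:
  fixes k :: nat and S t e :: real
  assumes "S + 1 \<le> real k * t" "0 < k" "e < 1 / real k"
  shows "S / real k + e \<le> t"
proof -
  have "e * real k < 1" using assms(2,3) by (simp add: field_simps)
  hence "S + e * real k \<le> real k * t" using assms(1) by linarith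
  hence "(S + e * real k) / real k \<le> t" using assms(2) by (simp add: field_simps)
  thus ?thesis using assms(2) by (simp add: field_simps)
qed

lemma le_real: assumes "a + 1 \<le> (b::nat)" shows "real a + 1 \<le> real b"
proof -
  from assms have "real (a+1) \<le> real b" by (simp only: of_nat_le_iff)
  thus ?thesis by simp
qed

lemma sc_single: "i \<in> N \<Longrightarrow> sc N (\<lambda>v. if v = i then Some c else None) d = (if d = c then 1 else 0)"
proof -
  assume "i \<in> N"
  hence "{j\<in>N. (if j = i then Some c else None) = Some d} = (if d = c then {i} else {})" by auto
  thus ?thesis unfolding sc_def by simp
qed

lemma sc_none: "sc N (\<lambda>v. None) d = 0" unfolding sc_def by simp

context vs begin

lemma fav_top:
  assumes "fav u j C = c" "j \<in> N" "d \<in> C" "d \<noteq> c"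
  shows "u j d < u j c"
  using fav_prop(2)[OF order_refl Cne assms(2) assms(3)] assms by simp

lemma other_elem:
  assumes "c \<in> C" obtains d where "d \<in> C" "d \<noteq> c"
proof -
  have "\<exists>d\<in>C. d \<noteq> c"
  proof (rule ccontr)
    assume "\<not> (\<exists>d\<in>C. d \<noteq> c)"
    hence "C \<subseteq> {c}" by auto
    hence "card C \<le> card {c}" by (rule card_mono[rotated]) simp
    thus False using m2 by simp
  qed
  thus ?thesis using that by blast
qed

lemma W_all_none: "Wset N C (\<lambda>v. None) = C"
  by (rule Wset_eq[OF finC order_refl Cne, where M=0]) (auto simp: sc_none)

lemma suff1:
  assumes c1: "cond1 u N C c" and iN: "i \<in> N"
  shows "is_PNE RC u N C \<epsilon> (\<lambda>v. if v = i then Some c else None)"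
proof -
  let ?b = "\<lambda>v. if v = i then Some c else None"
  have cC: "c \<in> C" and top: "\<And>j d. j \<in> N \<Longrightarrow> d \<in> C \<Longrightarrow> d \<noteq> c \<Longrightarrow> u j d < u j c"
    using c1 fav_top unfolding cond1_def by auto
  have sc0: "\<And>d. sc N ?b d = (if d = c then 1 else 0)" using sc_single[OF iN] .
  have W0: "Wset N C ?b = {c}"
    by (rule Wset_eq[OF finC _ _ _ _, where M=1]) (auto simp: sc0 cC)
  have U0: "EU RC u N C ?b j = real (u j c)" for j
    unfolding EU_single[OF W0] by simp
  have bal: "?b \<in> ballots N C" unfolding ballots_def using iN cC by auto
  show ?thesis unfolding is_PNE_def
  proof (intro conjI bal ballI)
    fix j x assume jN: "j \<in> N" and x: "x \<in> insert None (Some ` C)"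
    have scu: "\<And>d. sc N (?b(j:=x)) d + (if ?b j = Some d then 1 else 0) = sc N ?b d + (if x = Some d then 1 else 0)"
      by (rule sc_upd[OF finN jN])
    show "lazy_util RC u N C \<epsilon> (?b(j := x)) j \<le> lazy_util RC u N C \<epsilon> ?b j"
    proof (cases x)
      case None
      show ?thesis
      proof (cases "j = i")
        case True
        have e: "?b(j := x) = (\<lambda>v. None)" using None True by auto
        have "(\<Sum>d\<in>C. u j d) + 1 \<le> card C * u j c"
        proof -
          obtain d where "d \<in> C" "d \<noteq> c" using other_elem[OF cC] by blast
          thus ?thesis using sum_le_strict_nat[OF finC, of "u j" "u j c" d] top[OF jN] cC
            by (metis less_imp_le order_refl)
        qed
        hence "real (\<Sum>d\<in>C. u j d) + 1 \<le> real (card C * u j c)" by (rule le_real)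
        hence "(\<Sum>d\<in>C. real (u j d)) + 1 \<le> real (card C) * real (u j c)" by simp
        hence "(\<Sum>d\<in>C. real (u j d)) / real (card C) + \<epsilon> \<le> real (u j c)"
          by (rule avg_bound[OF _ _ em]) (use m2 in simp)
        moreover have "card C \<noteq> 1" using m2 by simp
        moreover have "EU RC u N C (?b(j := x)) j = (\<Sum>d\<in>C. real (u j d)) / real (card C)"
          unfolding e using EU_RC[of "\<lambda>v. None" j] W_all_none m2 by simp
        ultimately show ?thesis unfolding lazy_EU using U0 True None by simp
      next
        case False
        hence "?b(j := x) = ?b" using None by auto
        thus ?thesis by simp
      qed
    next
      case (Some d)
      hence dC: "d \<in> C" using x by auto
      show ?thesis
      proof (cases "j = i")
        case True
        have "sc N (?b(j:=x)) e = (if e = d then 1 else 0)" for e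
        proof -
          have "sc N (?b(j:=x)) e + (if e = c then 1 else 0) = (if e = c then 1 else 0) + (if e = d then 1 else 0)"
            using scu[of e] True Some sc0[of e] by (auto split: if_splits)
          thus ?thesis by simp
        qed
        hence W: "Wset N C (?b(j:=x)) = {d}"
          by (intro Wset_eq[OF finC _ _ _ _, where M=1]) (auto simp: dC)
        have "u j d \<le> u j c" using top[OF jN dC] by (cases "d = c") (auto intro: less_imp_le)
        thus ?thesis unfolding lazy_EU EU_single[OF W] using U0 True Some by simp
      next
        case False
        have sce: "\<And>e. sc N (?b(j:=x)) e = (if e = c then 1 else 0) + (if e = d then 1 else 0)"
          using scu False Some sc0 by (auto split: if_splits)
        show ?thesis
        proof (cases "d = c")
          case True
          hence W: "Wset N C (?b(j:=x)) = {c}"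
            by (intro Wset_eq[OF finC _ _ _ _, where M=2]) (auto simp: sce cC)
          thus ?thesis unfolding lazy_EU EU_single[OF W] using U0 False Some epos by simp
        next
          case dc: False
          hence W: "Wset N C (?b(j:=x)) = {c, d}"
            by (intro Wset_eq[OF finC _ _ _ _, where M=1]) (auto simp: sce cC dC)
          have "card {c, d} \<noteq> 1" using dc by simp
          hence "EU RC u N C (?b(j:=x)) j = (real (u j c) + real (u j d)) / 2"
            using EU_RC[of "?b(j:=x)" j] W dc by simp
          moreover have "u j d < u j c" using top[OF jN dC dc] .
          ultimately show ?thesis unfolding lazy_EU using U0 False Some epos by simp
        qed
      qed
    qed
  qed
qed

end


context vs begin

lemma suff2:
  assumes c1: "cond1 u N C c"
  shows "is_PNE RV u N C \<epsilon> (\<lambda>v. None)"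
proof -
  have cC: "c \<in> C" and favc: "\<And>j. j \<in> N \<Longrightarrow> fav u j C = c"
    and top: "\<And>j d. j \<in> N \<Longrightarrow> d \<in> C \<Longrightarrow> d \<noteq> c \<Longrightarrow> u j d < u j c"
    using c1 fav_top unfolding cond1_def by auto
  have U0: "EU RV u N C (\<lambda>v. None) j = real (u j c)" for j
  proof -
    have "\<forall>l\<in>N. vpick u N C (\<lambda>v. None) l = c"
      unfolding vpick_def W_all_none using favc by simp
    hence "(\<Sum>l\<in>N. real (u j (vpick u N C (\<lambda>v. None) l))) = (\<Sum>l\<in>N. real (u j c))" by simp
    moreover have "real (card N) \<noteq> 0" using n2 by simp
    ultimately show ?thesis unfolding EU_RV_any by simp
  qed
  show ?thesis unfolding is_PNE_def
  proof (intro conjI ballI)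
    show "(\<lambda>v. None) \<in> ballots N C" unfolding ballots_def by simp
    fix j x assume jN: "j \<in> N" and x: "x \<in> insert None (Some ` C)"
    show "lazy_util RV u N C \<epsilon> ((\<lambda>v. None)(j := x)) j \<le> lazy_util RV u N C \<epsilon> (\<lambda>v. None) j"
    proof (cases x)
      case None thus ?thesis by simp
    next
      case (Some d)
      hence dC: "d \<in> C" using x by auto
      have e: "(\<lambda>v. None)(j := x) = (\<lambda>v. if v = j then Some d else None)" using Some by auto
      have W: "Wset N C ((\<lambda>v. None)(j := x)) = {d}" unfolding e
        by (rule Wset_eq[OF finC _ _ _ _, where M=1]) (auto simp: sc_single[OF jN] dC)
      have "u j d \<le> u j c" using top[OF jN dC] by (cases "d = c") (auto intro: less_imp_le)
      thus ?thesis unfolding lazy_EU EU_single[OF W] U0 using Some epos by simp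
    qed
  qed
qed

end


lemma avg_drop:
  fixes B q :: real and k :: nat
  assumes "B \<le> (real k - 1) * (q - 1)" "2 \<le> k"
  shows "B / (real k - 1) \<le> (q + B - 1) / real k"
proof -
  have k1: "real k - 1 > 0" "real k > 0" using assms(2) by auto
  have "B * real k \<le> (q + B - 1) * (real k - 1)" using assms(1) by (simp add: algebra_simps)
  thus ?thesis using k1 by (simp add: field_simps)
qed

lemma sum_strict1:
  fixes f g :: "'a \<Rightarrow> real"
  assumes "finite N" "l \<in> N" "\<forall>j\<in>N. f j \<le> g j" "f l + 1 \<le> g l"
  shows "sum f N + 1 \<le> sum g N"
proof -
  have "sum f N = f l + sum f (N - {l})" using assms(1,2) by (rule sum.remove)
  moreover have "sum g N = g l + sum g (N - {l})" using assms(1,2) by (rule sum.remove)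
  moreover have "sum f (N - {l}) \<le> sum g (N - {l})" using assms(3) by (intro sum_mono) auto
  ultimately show ?thesis using assms(4) by linarith
qed

lemma div_le1:
  fixes S A :: real
  assumes "S + 1 \<le> A" shows "S / real n \<le> (A - 1) / real n"
  using assms by (intro divide_right_mono) auto

lemma eps_step:
  fixes A e :: real and n :: nat
  assumes "X \<le> (A - 1) / real n" "e < 1 / real n" "0 < n"
  shows "X + e \<le> A / real n"
proof -
  have "(A - 1) / real n = A / real n - 1 / real n" by (simp add: diff_divide_distrib)
  thus ?thesis using assms(1,2) by linarith
qed

context vs begin

lemma nat_lt_real: "(a::nat) < b \<Longrightarrow> real a \<le> real b - 1"
  by linarith

lemma suff3:
  assumes c2: "cond2 u N C"
  shows "is_PNE R u N C \<epsilon> (\<lambda>v. if v \<in> N then Some (fav u v C) else None)"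
proof -
  define a where "a = (\<lambda>l. fav u l C)"
  let ?b = "\<lambda>v. if v \<in> N then Some (a v) else None"
  have aC: "\<And>l. l \<in> N \<Longrightarrow> a l \<in> C" unfolding a_def using fav_prop(1)[OF order_refl Cne] by blast
  have top: "\<And>l d. l \<in> N \<Longrightarrow> d \<in> C \<Longrightarrow> d \<noteq> a l \<Longrightarrow> u l d < u l (a l)"
    unfolding a_def using fav_prop(2)[OF order_refl Cne] by blast
  have injA: "inj_on a N" using c2 unfolding cond2_def a_def by simp
  have avg: "\<And>l. l \<in> N \<Longrightarrow> real (Max ((\<lambda>i. u l (a i)) ` (N - {l}))) \<le> real (\<Sum>i\<in>N. u l (a i)) / real (card N)"
    using c2 unfolding cond2_def a_def by simp
  have aNC: "a ` N \<subseteq> C" using aC by auto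
  have scb: "sc N ?b c = (if c \<in> a ` N then 1 else 0)" for c
  proof (cases "c \<in> a ` N")
    case True
    then obtain l0 where l0: "l0 \<in> N" "c = a l0" by auto
    have "{j\<in>N. ?b j = Some c} = {l0}" using l0 inj_onD[OF injA] by auto
    thus ?thesis unfolding sc_def using True by simp
  next
    case False
    hence "{j\<in>N. ?b j = Some c} = {}" by auto
    thus ?thesis unfolding sc_def using False by simp
  qed
  have W0: "Wset N C ?b = a ` N"
    by (rule Wset_eq[OF finC aNC _ _ _, where M=1]) (use Nne scb in auto)
  have EU0: "EU R u N C ?b i = (\<Sum>j\<in>N. real (u i (a j))) / real (card N)" for i
    by (rule EU_allvote) (simp add: W0)
  have bal: "?b \<in> ballots N C" unfolding ballots_def using aC by auto
  have "is_PNE R u N C \<epsilon> ?b" unfolding is_PNE_def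
  proof (intro conjI bal ballI)
    fix l x assume lN: "l \<in> N" and x: "x \<in> insert None (Some ` C)"
    let ?A = "\<Sum>j\<in>N. real (u l (a j))"
    have bl: "?b l = Some (a l)" using lN by simp
    have scu: "\<And>c. sc N (?b(l:=x)) c + (if a l = c then 1 else 0) = sc N ?b c + (if x = Some c then 1 else 0)"
      using sc_upd[OF finN lN, of ?b x] bl by simp
    have L0: "lazy_util R u N C \<epsilon> ?b l = ?A / real (card N)" unfolding lazy_EU EU0 using bl by simp
    have aN: "a ` N = insert (a l) (a ` (N - {l}))" using lN by auto
    have nal: "a l \<notin> a ` (N - {l})" using injA lN unfolding inj_on_def by auto
    have Nl_ne: "N - {l} \<noteq> {}"
    proof
      assume "N - {l} = {}" hence "N \<subseteq> {l}" by auto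
      hence "card N \<le> card {l}" by (rule card_mono[rotated]) simp
      thus False using n2 by simp
    qed
    have below: "u l (a j) < u l (a l)" if j: "j \<in> N - {l}" for j
    proof -
      have "a j \<in> a ` (N - {l})" using j by blast
      hence "a j \<noteq> a l" using nal by metis
      moreover have "a j \<in> C" using aC j by auto
      ultimately show ?thesis using top[OF lN] by blast
    qed
    show "lazy_util R u N C \<epsilon> (?b(l := x)) l \<le> lazy_util R u N C \<epsilon> ?b l"
    proof (cases x)
      case None
      have sc1: "sc N (?b(l:=x)) c = (if c \<in> a ` (N - {l}) then 1 else 0)" for c
        using scu[of c] scb[of c] None aN nal by (auto split: if_splits)
      have W1: "Wset N C (?b(l:=x)) = a ` (N - {l})"
        by (rule Wset_eq[OF finC _ _ _ _, where M=1]) (use aNC aN Nl_ne sc1 in auto)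
      have "EU R u N C (?b(l:=x)) l \<le> (?A - 1) / real (card N)"
      proof (cases R)
        case RC
        let ?B = "\<Sum>j\<in>N - {l}. real (u l (a j))"
        have inj1: "inj_on a (N - {l})" using injA by (rule inj_on_subset) auto
        have cW: "card (a ` (N - {l})) = card N - 1" using card_image[OF inj1] finN lN by simp
        have sW: "(\<Sum>c\<in>a ` (N - {l}). real (u l c)) = ?B" using sum.reindex[OF inj1] by simp
        have A: "?A = real (u l (a l)) + ?B" using sum.remove[OF finN lN] by simp
        have Bb: "?B \<le> (real (card N) - 1) * (real (u l (a l)) - 1)"
        proof -
          have "?B \<le> (\<Sum>j\<in>N - {l}. real (u l (a l)) - 1)"
            by (rule sum_mono) (use below in \<open>auto intro: nat_lt_real\<close>)
          also have "\<dots> = (real (card N) - 1) * (real (u l (a l)) - 1)" using finN lN n2 by (simp add: of_nat_diff)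
          finally show ?thesis .
        qed
        have "EU R u N C (?b(l:=x)) l = ?B / (real (card N) - 1)"
          unfolding RC EU_RC_any W1 cW sW using n2 by (simp add: of_nat_diff)
        also have "\<dots> \<le> (real (u l (a l)) + ?B - 1) / real (card N)" by (rule avg_drop[OF Bb n2])
        also have "(real (u l (a l)) + ?B - 1) / real (card N) = (?A - 1) / real (card N)"
          by (simp only: A)
        finally show ?thesis .
      next
        case RV
        let ?v = "vpick u N C (?b(l:=x))"
        have "(\<Sum>j\<in>N. real (u l (?v j))) + 1 \<le> ?A"
        proof (rule sum_strict1[OF finN lN])
          show "\<forall>j\<in>N. real (u l (?v j)) \<le> real (u l (a j))"
          proof
            fix j assume jN: "j \<in> N"
            show "real (u l (?v j)) \<le> real (u l (a j))"
            proof (cases "j = l")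
              case True
              have "?v j \<in> C" by (rule vpick_C[OF jN])
              thus ?thesis using top[OF lN] True by (cases "?v j = a l") (auto intro: less_imp_le)
            next
              case False
              hence "(?b(l:=x)) j = Some (a j)" "a j \<in> Wset N C (?b(l:=x))" using jN W1 by auto
              thus ?thesis unfolding vpick_def by simp
            qed
          qed
          have "?v l \<in> a ` (N - {l})" using vpick_in[OF lN, of "?b(l:=x)"] unfolding W1 .
          hence "?v l \<noteq> a l" "?v l \<in> C" using nal aNC by auto
          hence "u l (?v l) < u l (a l)" using top[OF lN] by simp
          thus "real (u l (?v l)) + 1 \<le> real (u l (a l))" by linarith
        qed
        thus ?thesis unfolding RV EU_RV_any by (rule div_le1)
      qed
      hence "EU R u N C (?b(l:=x)) l + \<epsilon> \<le> ?A / real (card N)"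
        by (rule eps_step[OF _ en]) (use n2 in simp)
      thus ?thesis unfolding lazy_EU EU0 using None lN by simp
    next
      case (Some d)
      hence dC: "d \<in> C" using x by auto
      show ?thesis
      proof (cases "d \<in> a ` N")
        case True
        show ?thesis
        proof (cases "d = a l")
          case True
          hence "?b(l := x) = ?b" using Some bl by (simp only: fun_upd_idem)
          thus ?thesis by simp
        next
          case False
          then obtain o' where o': "o' \<in> N - {l}" "d = a o'" using \<open>d \<in> a ` N\<close> by auto
          have sc1: "sc N (?b(l:=x)) c = (if c = d then 2 else if c \<in> a ` (N - {l, o'}) then 1 else 0)" for c
          proof -
            have "a ` N = insert (a l) (insert d (a ` (N - {l, o'})))" using lN o' by auto
            moreover have "d \<notin> a ` (N - {l, o'})" "a l \<notin> a ` (N - {l, o'})" "a l \<noteq> d"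
              using injA lN o' unfolding inj_on_def by auto
            ultimately show ?thesis using scu[of c] scb[of c] Some by (auto split: if_splits)
          qed
          have W1: "Wset N C (?b(l:=x)) = {d}"
            by (rule Wset_eq[OF finC _ _ _ _, where M=2]) (use dC sc1 in auto)
          have "real (u l d) \<le> real (Max ((\<lambda>i. u l (a i)) ` (N - {l})))"
            using o' finN by (simp add: Max_ge)
          also have "\<dots> \<le> ?A / real (card N)" using avg[OF lN] by simp
          finally show ?thesis unfolding lazy_EU EU0 EU_single[OF W1] using Some lN by simp
        qed
      next
        case False
        define h where "h = a(l := d)"
        have sc1: "sc N (?b(l:=x)) c = (if c \<in> insert d (a ` (N - {l})) then 1 else 0)" for c
          using scu[of c] scb[of c] Some aN nal False by (auto split: if_splits)
        have W1: "Wset N C (?b(l:=x)) = insert d (a ` (N - {l}))"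
          by (rule Wset_eq[OF finC _ _ _ _, where M=1]) (use aNC aN dC sc1 in auto)
        have EU1: "EU R u N C (?b(l:=x)) l = (\<Sum>j\<in>N. real (u l (h j))) / real (card N)"
          by (rule EU_allvote) (use W1 Some in \<open>auto simp: h_def\<close>)
        have "(\<Sum>j\<in>N. real (u l (h j))) \<le> ?A"
        proof (rule sum_mono)
          fix j assume "j \<in> N"
          show "real (u l (h j)) \<le> real (u l (a j))"
          proof (cases "j = l")
            case True
            have "d \<noteq> a l" using False lN by auto
            thus ?thesis using top[OF lN dC] True by (simp add: h_def)
          qed (simp add: h_def)
        qed
        hence "EU R u N C (?b(l:=x)) l \<le> ?A / real (card N)" unfolding EU1
          by (simp add: divide_right_mono)
        thus ?thesis unfolding lazy_EU EU0 using Some lN by simp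
      qed
    qed
  qed
  thus ?thesis unfolding a_def .
qed

end


context vs begin

lemma suff4:
  assumes c3: "cond3 u N C X"
  shows "is_PNE R u N C \<epsilon> (\<lambda>v. if v \<in> N then Some (fav u v X) else None)"
proof -
  have XC: "X \<subseteq> C" and k2: "2 \<le> card X" and kn: "2 * card X \<le> card N" and km: "card X \<le> card C"
    using c3 unfolding cond3_def by auto
  obtain g where gX: "\<forall>i\<in>N. g i \<in> X" and gfib: "\<forall>c\<in>X. card {i \<in> N. g i = c} * card X = card N"
    and pref: "\<forall>i\<in>N. \<forall>c\<in>X - {g i}. u i c < u i (g i)"
    and avg: "\<forall>i\<in>N. real (\<Sum>c\<in>X. u i c) / real (card X) \<ge> real (Max (u i ` (X - {g i})))"
    using c3 unfolding cond3_def by blast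
  have finX: "finite X" using XC finC finite_subset by auto
  have Xne: "X \<noteq> {}" using k2 by auto
  have fg: "\<And>v. v \<in> N \<Longrightarrow> fav u v X = g v"
    using gX pref by (intro fav_eq) auto
  have beq: "(\<lambda>v. if v \<in> N then Some (fav u v X) else None) = (\<lambda>v. if v \<in> N then Some (g v) else None)"
    using fg by auto
  let ?b = "\<lambda>v. if v \<in> N then Some (g v) else None"
  obtain c0 where c0: "c0 \<in> X" using Xne by auto
  define M where "M = card {i \<in> N. g i = c0}"
  have nM: "card N = M * card X" using gfib c0 unfolding M_def by simp
  have fib: "card {i \<in> N. g i = c} = M" if "c \<in> X" for c
  proof -
    have "card {i \<in> N. g i = c} * card X = card N" using gfib that by blast
    hence "card {i \<in> N. g i = c} * card X = M * card X" using nM by simp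
    moreover have "card X \<noteq> 0" using k2 by simp
    ultimately show ?thesis by simp
  qed
  have M2: "2 \<le> M"
  proof -
    have "2 * card X \<le> M * card X" using kn nM by simp
    thus ?thesis using k2 by simp
  qed
  have scb: "sc N ?b c = (if c \<in> X then M else 0)" for c
  proof -
    have e: "{j\<in>N. ?b j = Some c} = {i \<in> N. g i = c}" by auto
    show ?thesis
    proof (cases "c \<in> X")
      case True thus ?thesis unfolding sc_def e using fib by simp
    next
      case False
      hence e0: "{i \<in> N. g i = c} = {}" using gX by auto
      show ?thesis unfolding sc_def e e0 using False by simp
    qed
  qed
  have W0: "Wset N C ?b = X"
    by (rule Wset_eq[OF finC XC Xne, where M=M]) (use scb M2 in auto)
  have EU0: "EU R u N C ?b i = (\<Sum>j\<in>N. real (u i (g j))) / real (card N)" for i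
    by (rule EU_allvote) (simp add: W0 gX)
  have GP: "(\<Sum>j\<in>N. real (u i (g j))) / real (card N) = (\<Sum>c\<in>X. real (u i c)) / real (card X)" for i
  proof -
    have "(\<Sum>j\<in>N. real (u i (g j))) = (\<Sum>c\<in>X. real (card {l\<in>N. g l = c}) * real (u i c))"
      by (rule fiber_sum[OF finN finX gX])
    also have "\<dots> = real M * (\<Sum>c\<in>X. real (u i c))"
      by (simp add: fib sum_distrib_left)
    finally show ?thesis using nM M2 by simp
  qed
  have bal: "?b \<in> ballots N C" unfolding ballots_def using gX XC by auto
  have emk: "\<epsilon> < 1 / real (card X)"
  proof -
    have "1 / real (card C) \<le> 1 / real (card X)" using km k2 by (intro divide_left_mono) auto
    thus ?thesis using em by linarith
  qed
  have "is_PNE R u N C \<epsilon> ?b" unfolding is_PNE_def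
  proof (intro conjI bal ballI)
    fix i x assume iN: "i \<in> N" and x: "x \<in> insert None (Some ` C)"
    let ?G = "\<Sum>j\<in>N. real (u i (g j))"
    let ?P = "\<Sum>c\<in>X. real (u i c)"
    have bi: "?b i = Some (g i)" using iN by simp
    have giX: "g i \<in> X" using gX iN by auto
    have scu: "\<And>c. sc N (?b(i:=x)) c + (if g i = c then 1 else 0) = sc N ?b c + (if x = Some c then 1 else 0)"
      using sc_upd[OF finN iN, of ?b x] bi by simp
    have prefi: "\<And>c. c \<in> X \<Longrightarrow> c \<noteq> g i \<Longrightarrow> u i c < u i (g i)" using pref iN by auto
    have Xi_ne: "X - {g i} \<noteq> {}"
    proof
      assume "X - {g i} = {}" hence "X \<subseteq> {g i}" by auto
      hence "card X \<le> card {g i}" by (rule card_mono[rotated]) simp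
      thus False using k2 by simp
    qed
    show "lazy_util R u N C \<epsilon> (?b(i := x)) i \<le> lazy_util R u N C \<epsilon> ?b i"
    proof (cases "x = None \<or> (\<exists>d. x = Some d \<and> d \<notin> X)")
      case True
      have sc1: "sc N (?b(i:=x)) c = (if c = g i then M - 1 else if c \<in> X then M else if x = Some c then 1 else 0)" for c
        using scu[of c] scb[of c] True giX by (auto split: if_splits)
      have W1: "Wset N C (?b(i:=x)) = X - {g i}"
      proof (rule Wset_eq[OF finC _ Xi_ne, where M=M])
        show "X - {g i} \<subseteq> C" using XC by auto
        show "\<forall>c\<in>X - {g i}. sc N (?b(i:=x)) c = M" using sc1 by auto
        show "\<forall>c\<in>C - (X - {g i}). sc N (?b(i:=x)) c < M" using sc1 M2 by auto
      qed
      have "EU R u N C (?b(i:=x)) i + \<epsilon> \<le> ?G / real (card N)"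
      proof (cases R)
        case RC
        let ?B = "\<Sum>c\<in>X - {g i}. real (u i c)"
        have cW: "card (X - {g i}) = card X - 1" using finX giX by simp
        have A: "?P = real (u i (g i)) + ?B" using sum.remove[OF finX giX] by simp
        have Bb: "?B \<le> (real (card X) - 1) * (real (u i (g i)) - 1)"
        proof -
          have "?B \<le> (\<Sum>c\<in>X - {g i}. real (u i (g i)) - 1)"
            by (rule sum_mono) (use prefi in \<open>auto intro: nat_lt_real\<close>)
          also have "\<dots> = (real (card X) - 1) * (real (u i (g i)) - 1)" using cW k2 by (simp add: of_nat_diff)
          finally show ?thesis .
        qed
        have "EU R u N C (?b(i:=x)) i = ?B / (real (card X) - 1)"
          unfolding RC EU_RC_any W1 cW using k2 by (simp add: of_nat_diff)
        also have "\<dots> \<le> (real (u i (g i)) + ?B - 1) / real (card X)" by (rule avg_drop[OF Bb k2])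
        also have "(real (u i (g i)) + ?B - 1) / real (card X) = (?P - 1) / real (card X)"
          by (simp only: A)
        finally have "EU R u N C (?b(i:=x)) i + \<epsilon> \<le> ?P / real (card X)"
          by (rule eps_step[OF _ emk]) (use k2 in simp)
        thus ?thesis using GP[of i] by simp
      next
        case RV
        let ?v = "vpick u N C (?b(i:=x))"
        have vW: "\<And>j. j \<in> N \<Longrightarrow> ?v j \<in> X - {g i}" using vpick_in[of _ "?b(i:=x)"] unfolding W1 .
        have "(\<Sum>j\<in>N. real (u i (?v j))) + 1 \<le> ?G"
        proof (rule sum_strict1[OF finN iN])
          show "\<forall>j\<in>N. real (u i (?v j)) \<le> real (u i (g j))"
          proof
            fix j assume jN: "j \<in> N"
            show "real (u i (?v j)) \<le> real (u i (g j))"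
            proof (cases "g j = g i")
              case True
              have "?v j \<in> X - {g i}" by (rule vW[OF jN])
              hence "u i (?v j) < u i (g i)" using prefi by auto
              thus ?thesis using True by simp
            next
              case False
              hence "j \<noteq> i" by auto
              hence "(?b(i:=x)) j = Some (g j)" "g j \<in> Wset N C (?b(i:=x))" using jN W1 gX False by auto
              thus ?thesis unfolding vpick_def by simp
            qed
          qed
          have "?v i \<in> X - {g i}" by (rule vW[OF iN])
          hence "u i (?v i) < u i (g i)" using prefi by auto
          thus "real (u i (?v i)) + 1 \<le> real (u i (g i))" by linarith
        qed
        hence "EU R u N C (?b(i:=x)) i \<le> (?G - 1) / real (card N)" unfolding RV EU_RV_any by (rule div_le1)
        thus ?thesis by (rule eps_step[OF _ en]) (use n2 in simp)
      qed
      moreover have "lazy_util R u N C \<epsilon> (?b(i := x)) i \<le> EU R u N C (?b(i:=x)) i + \<epsilon>"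
        unfolding lazy_EU using epos by simp
      ultimately show ?thesis unfolding lazy_EU EU0 using iN by simp
    next
      case False
      then obtain d where d: "x = Some d" "d \<in> X" using x by auto
      show ?thesis
      proof (cases "d = g i")
        case True
        hence "?b(i := x) = ?b" using d bi by (simp only: fun_upd_idem)
        thus ?thesis by simp
      next
        case False
        have sc1: "sc N (?b(i:=x)) c = (if c = d then M + 1 else if c = g i then M - 1 else if c \<in> X then M else 0)" for c
          using scu[of c] scb[of c] d False giX by (auto split: if_splits)
        have W1: "Wset N C (?b(i:=x)) = {d}"
          by (rule Wset_eq[OF finC _ _ _ _, where M="M+1"]) (use d XC sc1 M2 in auto)
        have "real (u i d) \<le> real (Max (u i ` (X - {g i})))"
          using d False finX by (simp add: Max_ge)
        also have "\<dots> \<le> ?P / real (card X)" using avg iN by simp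
        also have "\<dots> = ?G / real (card N)" using GP[of i] by simp
        finally show ?thesis unfolding lazy_EU EU0 EU_single[OF W1] using d iN by simp
      qed
    qed
  qed
  thus ?thesis unfolding beq .
qed

end


lemma avg_strict:
  fixes k :: nat and S t e :: real
  assumes "S + 1 \<le> real k * t" "0 < k" "e < 1 / real k"
  shows "S / real k + e < t"
proof -
  have "e * real k < 1" using assms(2,3) by (simp add: field_simps)
  hence "S + e * real k < real k * t" using assms(1) by linarith
  hence "(S + e * real k) / real k < t" using assms(2) by (simp add: field_simps)
  thus ?thesis using assms(2) by (simp add: field_simps)
qed

lemma avg_lower:
  fixes S t :: real and n :: nat
  assumes "real n * t + 1 \<le> S" "0 < n"
  shows "t + 1 / real n \<le> S / real n"
proof -
  have "(real n * t + 1) / real n \<le> S / real n" using assms by (intro divide_right_mono) auto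
  moreover have "(real n * t + 1) / real n = t + 1 / real n" using assms(2) by (simp add: field_simps)
  ultimately show ?thesis by simp
qed

lemma card2_other:
  assumes "finite S" "2 \<le> card S" "f \<in> S" obtains d where "d \<in> S" "d \<noteq> f"
proof -
  have "\<exists>d\<in>S. d \<noteq> f"
  proof (rule ccontr)
    assume "\<not> (\<exists>d\<in>S. d \<noteq> f)"
    hence "S \<subseteq> {f}" by auto
    hence "card S \<le> card {f}" by (rule card_mono[rotated]) simp
    thus False using assms(2) by simp
  qed
  thus ?thesis using that by blast
qed

lemma sc_pos: assumes "finite N" "j \<in> N" "b j = Some c" shows "1 \<le> sc N b c"
proof -
  have "j \<in> {i\<in>N. b i = Some c}" "finite {i\<in>N. b i = Some c}" using assms by auto
  hence "card {i\<in>N. b i = Some c} \<noteq> 0" by auto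
  thus ?thesis unfolding sc_def by simp
qed

lemma sc_pos_ex: "1 \<le> sc N b c \<Longrightarrow> \<exists>j\<in>N. b j = Some c"
  unfolding sc_def by (metis (mono_tags, lifting) card.empty empty_Collect_eq not_one_le_zero)

context vs begin

lemma pne_dev:
  assumes "is_PNE R u N C \<epsilon> b" "i \<in> N" "x \<in> insert None (Some ` C)"
  shows "lazy_util R u N C \<epsilon> (b(i:=x)) i \<le> lazy_util R u N C \<epsilon> b i"
  using assms unfolding is_PNE_def by blast

lemma pne_bal:
  assumes "is_PNE R u N C \<epsilon> b"
  shows "\<And>i. i \<in> N \<Longrightarrow> b i = None \<or> (\<exists>c\<in>C. b i = Some c)" "\<And>i. i \<notin> N \<Longrightarrow> b i = None"
  using assms unfolding is_PNE_def ballots_def by auto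

lemma W_sc: "c \<in> Wset N C b \<Longrightarrow> sc N b c = Max (sc N b ` C)"
  unfolding Wset_def by auto

lemma sc_le: "c \<in> C \<Longrightarrow> sc N b c \<le> Max (sc N b ` C)"
  using finC by simp

lemma notW_sc: "c \<in> C \<Longrightarrow> c \<notin> Wset N C b \<Longrightarrow> sc N b c < Max (sc N b ` C)"
  unfolding Wset_def using sc_le[of c b] by auto

lemma fav_C:
  assumes "j \<in> N" shows "fav u j C \<in> C" "\<And>d. d \<in> C \<Longrightarrow> d \<noteq> fav u j C \<Longrightarrow> u j d < u j (fav u j C)"
  using fav_prop[OF order_refl Cne assms] by auto

lemma sum_const_bound:
  fixes f :: "'v \<Rightarrow> nat"
  assumes "\<forall>j\<in>N. f j \<le> t" "y \<in> N" "f y < t"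
  shows "(\<Sum>j\<in>N. real (f j)) + 1 \<le> real (card N) * real t"
proof -
  have "sum f N + 1 \<le> card N * t" by (rule sum_le_strict_nat[OF finN assms])
  hence "real (sum f N) + 1 \<le> real (card N * t)" by (rule le_real)
  thus ?thesis by simp
qed

lemma nec_M0:
  assumes P: "is_PNE R u N C \<epsilon> b" and M0: "Max (sc N b ` C) = 0"
  shows "\<exists>c. cond1 u N C c \<and> ((R = RC \<and> (\<exists>i\<in>N. b = (\<lambda>v. if v = i then Some c else None))) \<or> (R = RV \<and> b = (\<lambda>v. None)))"
proof -
  have bN: "b = (\<lambda>v. None)"
  proof
    fix v show "b v = None"
    proof (cases "v \<in> N")
      case True
      show ?thesis
      proof (rule ccontr)
        assume "b v \<noteq> None"
        then obtain c where c: "c \<in> C" "b v = Some c" using pne_bal(1)[OF P True] by auto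
        have "1 \<le> sc N b c" by (rule sc_pos[where b=b, OF finN True c(2)])
        thus False using sc_le[OF c(1), of b] M0 by simp
      qed
    next
      case False thus ?thesis using pne_bal(2)[OF P] by simp
    qed
  qed
  obtain i0 where i0: "i0 \<in> N" using Nne by auto
  let ?a = "\<lambda>j. fav u j C"
  have dev: "real (u i (?a i)) \<le> lazy_util R u N C \<epsilon> (\<lambda>v. None) i" if iN: "i \<in> N" for i
  proof -
    have x: "Some (?a i) \<in> insert None (Some ` C)" using fav_C(1)[OF iN] by auto
    have e: "(\<lambda>v. None)(i := Some (?a i)) = (\<lambda>v. if v = i then Some (?a i) else None)" by auto
    have W: "Wset N C ((\<lambda>v. None)(i := Some (?a i))) = {?a i}" unfolding e
      by (rule Wset_eq[OF finC _ _ _ _, where M=1]) (auto simp: sc_single[OF iN] fav_C(1)[OF iN])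
    have "lazy_util R u N C \<epsilon> ((\<lambda>v. None)(i := Some (?a i))) i = real (u i (?a i))"
      unfolding lazy_EU EU_single[OF W] by simp
    thus ?thesis using pne_dev[OF P iN x] bN by simp
  qed
  show ?thesis
  proof (cases R)
    case RC
    have "(\<Sum>d\<in>C. real (u i0 d)) + 1 \<le> real (card C) * real (u i0 (?a i0))"
    proof -
      obtain d where d: "d \<in> C" "d \<noteq> ?a i0" using other_elem[OF fav_C(1)[OF i0]] by blast
      have "sum (u i0) C + 1 \<le> card C * u i0 (?a i0)"
        by (rule sum_le_strict_nat[OF finC _ d(1)])
           (use fav_C[OF i0] d in \<open>auto intro: less_imp_le\<close>)
      hence "real (sum (u i0) C) + 1 \<le> real (card C * u i0 (?a i0))" by (rule le_real)
      thus ?thesis by simp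
    qed
    hence "(\<Sum>d\<in>C. real (u i0 d)) / real (card C) + \<epsilon> < real (u i0 (?a i0))"
      by (rule avg_strict[OF _ _ em]) (use m2 in simp)
    moreover have "lazy_util R u N C \<epsilon> (\<lambda>v. None) i0 = (\<Sum>d\<in>C. real (u i0 d)) / real (card C) + \<epsilon>"
      unfolding lazy_EU RC EU_RC_any W_all_none by simp
    ultimately show ?thesis using dev[OF i0] by simp
  next
    case RV
    have same: "?a j = ?a i0" if jN: "j \<in> N" for j
    proof (rule ccontr)
      assume ne: "?a j \<noteq> ?a i0"
      have vp: "vpick u N C (\<lambda>v. None) l = ?a l" for l unfolding vpick_def W_all_none by simp
      have "(\<Sum>l\<in>N. real (u i0 (?a l))) + 1 \<le> real (card N) * real (u i0 (?a i0))"
      proof (rule sum_const_bound[OF _ jN])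
        show "\<forall>l\<in>N. u i0 (?a l) \<le> u i0 (?a i0)"
          using fav_C[OF i0] fav_C(1) by (metis less_imp_le order_refl)
        show "u i0 (?a j) < u i0 (?a i0)" using fav_C[OF i0] fav_C(1)[OF jN] ne by blast
      qed
      hence "(\<Sum>l\<in>N. real (u i0 (?a l))) / real (card N) + \<epsilon> < real (u i0 (?a i0))"
        by (rule avg_strict[OF _ _ en]) (use n2 in simp)
      moreover have "lazy_util R u N C \<epsilon> (\<lambda>v. None) i0 = (\<Sum>l\<in>N. real (u i0 (?a l))) / real (card N) + \<epsilon>"
        unfolding lazy_EU RV EU_RV_any vp by simp
      ultimately show False using dev[OF i0] by simp
    qed
    have "cond1 u N C (?a i0)" unfolding cond1_def using fav_C(1)[OF i0] same by auto
    thus ?thesis using RV bN by blast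
  qed
qed


lemma nec_single:
  assumes P: "is_PNE R u N C \<epsilon> b" and M1: "Max (sc N b ` C) \<noteq> 0" and W1: "Wset N C b = {c}"
  shows "\<exists>c. cond1 u N C c \<and> ((R = RC \<and> (\<exists>i\<in>N. b = (\<lambda>v. if v = i then Some c else None))) \<or> (R = RV \<and> b = (\<lambda>v. None)))"
proof -
  let ?M = "Max (sc N b ` C)"
  let ?a = "\<lambda>j. fav u j C"
  have cC: "c \<in> C" using W1 Wset_sub[of N C b] by auto
  have scc: "sc N b c = ?M" using W_sc[of c b] W1 by simp
  have sclt: "\<And>e. e \<in> C \<Longrightarrow> e \<noteq> c \<Longrightarrow> sc N b e < ?M" using notW_sc W1 by auto
  have EUb: "EU R u N C b i = real (u i c)" for i using EU_single[OF W1] .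
  \<comment> \<open>dropping a vote that keeps c the unique winner is profitable\<close>
  have nodrop: False if iN: "i \<in> N" and bi: "b i = Some d" and keep: "\<forall>e\<in>C. e \<noteq> c \<longrightarrow> sc N (b(i:=None)) e < sc N (b(i:=None)) c" for i d
  proof -
    have scu: "\<And>e. sc N (b(i:=None)) e + (if d = e then 1 else 0) = sc N b e"
      using sc_upd[OF finN iN, of b None] bi by simp
    have W': "Wset N C (b(i:=None)) = {c}"
      by (rule Wset_eq[OF finC _ _ _ _, where M="sc N (b(i:=None)) c"]) (use cC keep in auto)
    have "lazy_util R u N C \<epsilon> (b(i:=None)) i \<le> lazy_util R u N C \<epsilon> b i"
      by (rule pne_dev[OF P iN]) simp
    thus False unfolding lazy_EU EU_single[OF W'] EUb using bi epos by simp
  qed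
  have votes: "b i = None \<or> b i = Some c" if iN: "i \<in> N" for i
  proof (rule ccontr)
    assume "\<not> (b i = None \<or> b i = Some c)"
    then obtain d where d: "b i = Some d" "d \<noteq> c" "d \<in> C" using pne_bal(1)[OF P iN] by auto
    have scu: "\<And>e. sc N (b(i:=None)) e + (if d = e then 1 else 0) = sc N b e"
      using sc_upd[OF finN iN, of b None] d by simp
    have "\<forall>e\<in>C. e \<noteq> c \<longrightarrow> sc N (b(i:=None)) e < sc N (b(i:=None)) c"
    proof (intro ballI impI)
      fix e assume "e \<in> C" "e \<noteq> c"
      have "sc N (b(i:=None)) e \<le> sc N b e" using scu[of e] by linarith
      moreover have "sc N (b(i:=None)) c = ?M" using scu[of c] d scc by simp
      ultimately show "sc N (b(i:=None)) e < sc N (b(i:=None)) c" using sclt[OF \<open>e \<in> C\<close> \<open>e \<noteq> c\<close>] by linarith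
    qed
    thus False using nodrop[OF iN d(1)] by blast
  qed
  have sc0: "sc N b e = 0" if "e \<noteq> c" for e
  proof -
    have e0: "{j\<in>N. b j = Some e} = {}" using votes that by fastforce
    show ?thesis unfolding sc_def e0 by simp
  qed
  have M1': "?M = 1"
  proof (rule ccontr)
    assume "?M \<noteq> 1"
    hence M2: "2 \<le> ?M" using M1 by simp
    then obtain i where iN: "i \<in> N" and bi: "b i = Some c" using sc_pos_ex[of N b c] scc by auto
    have scu: "\<And>e. sc N (b(i:=None)) e + (if c = e then 1 else 0) = sc N b e"
      using sc_upd[OF finN iN, of b None] bi by simp
    have "\<forall>e\<in>C. e \<noteq> c \<longrightarrow> sc N (b(i:=None)) e < sc N (b(i:=None)) c"
    proof (intro ballI impI)
      fix e assume "e \<in> C" "e \<noteq> c"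
      have "sc N (b(i:=None)) e = 0" using scu[of e] sc0[OF \<open>e \<noteq> c\<close>] \<open>e \<noteq> c\<close> by simp
      moreover have "sc N (b(i:=None)) c = ?M - 1" using scu[of c] scc by simp
      ultimately show "sc N (b(i:=None)) e < sc N (b(i:=None)) c" using M2 by simp
    qed
    thus False using nodrop[OF iN bi] by blast
  qed
  have "card {j\<in>N. b j = Some c} = 1" using scc M1' unfolding sc_def by simp
  then obtain i where iset: "{j\<in>N. b j = Some c} = {i}" by (rule card_1_singletonE)
  have iN: "i \<in> N" and bi: "b i = Some c" using iset by auto
  have beq: "b = (\<lambda>v. if v = i then Some c else None)"
  proof
    fix v show "b v = (if v = i then Some c else None)"
    proof (cases "v \<in> N")
      case True
      show ?thesis
      proof (cases "v = i")
        case False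
        hence "v \<notin> {j\<in>N. b j = Some c}" using iset by auto
        thus ?thesis using votes[OF True] True False by auto
      qed (simp add: bi)
    next
      case False
      thus ?thesis using pne_bal(2)[OF P False] iN by auto
    qed
  qed
  have ci: "?a i = c"
  proof (rule ccontr)
    assume ne: "?a i \<noteq> c"
    have ai: "?a i \<in> C" by (rule fav_C(1)[OF iN])
    have e: "b(i := Some (?a i)) = (\<lambda>v. if v = i then Some (?a i) else None)" unfolding beq by auto
    have W': "Wset N C (b(i := Some (?a i))) = {?a i}" unfolding e
      by (rule Wset_eq[OF finC _ _ _ _, where M=1]) (auto simp: sc_single[OF iN] ai)
    have "lazy_util R u N C \<epsilon> (b(i := Some (?a i))) i \<le> lazy_util R u N C \<epsilon> b i"
      by (rule pne_dev[OF P iN]) (use ai in simp)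
    hence "u i (?a i) \<le> u i c" unfolding lazy_EU EU_single[OF W'] EUb using bi by simp
    thus False using fav_C(2)[OF iN cC] ne by simp
  qed
  have allc: "?a j = c" if jN: "j \<in> N" for j
  proof (rule ccontr)
    assume ne: "?a j \<noteq> c"
    hence ji: "j \<noteq> i" using ci by auto
    have aj: "?a j \<in> C" by (rule fav_C(1)[OF jN])
    have lt: "u j c < u j (?a j)" using fav_C(2)[OF jN cC] ne by simp
    let ?b' = "b(j := Some (?a j))"
    have bj: "b j = None" using beq ji by simp
    have scu: "\<And>e. sc N ?b' e = sc N b e + (if ?a j = e then 1 else 0)"
      using sc_upd[OF finN jN, of b "Some (?a j)"] bj by simp
    have scb: "\<And>e. sc N b e = (if e = c then 1 else 0)" unfolding beq using sc_single[OF iN] .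
    have W': "Wset N C ?b' = {c, ?a j}"
      by (rule Wset_eq[OF finC _ _ _ _, where M=1]) (use cC aj scu scb ne in auto)
    have dv: "lazy_util R u N C \<epsilon> ?b' j \<le> lazy_util R u N C \<epsilon> b j"
      by (rule pne_dev[OF P jN]) (use aj in simp)
    have Lb: "lazy_util R u N C \<epsilon> b j = real (u j c) + \<epsilon>" unfolding lazy_EU EUb using bj by simp
    have "real (u j c) + \<epsilon> < EU R u N C ?b' j"
    proof (cases R)
      case RC
      have "card {c, ?a j} = 2" using ne by simp
      hence "EU R u N C ?b' j = (real (u j c) + real (u j (?a j))) / 2"
        unfolding RC EU_RC_any W' using ne by simp
      moreover have "\<epsilon> < 1/2"
      proof -
        have "1 / real (card N) \<le> 1 / 2" using n2 by (intro divide_left_mono) auto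
        thus ?thesis using en by linarith
      qed
      ultimately show ?thesis using lt by simp
    next
      case RV
      let ?v = "vpick u N C ?b'"
      have "(\<Sum>l\<in>N. real (u j c)) + 1 \<le> (\<Sum>l\<in>N. real (u j (?v l)))"
      proof (rule sum_strict1[OF finN jN])
        show "\<forall>l\<in>N. real (u j c) \<le> real (u j (?v l))"
        proof
          fix l assume "l \<in> N"
          hence "?v l \<in> {c, ?a j}" using vpick_in[of l ?b'] W' by simp
          thus "real (u j c) \<le> real (u j (?v l))" using lt by auto
        qed
        have "?v j = ?a j" unfolding vpick_def W' by simp
        thus "real (u j c) + 1 \<le> real (u j (?v j))" using lt by simp
      qed
      hence "real (card N) * real (u j c) + 1 \<le> (\<Sum>l\<in>N. real (u j (?v l)))" by simp
      hence "real (u j c) + 1 / real (card N) \<le> (\<Sum>l\<in>N. real (u j (?v l))) / real (card N)"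
        by (rule avg_lower) (use n2 in simp)
      thus ?thesis unfolding RV EU_RV_any using en by linarith
    qed
    thus False using dv Lb unfolding lazy_EU by simp
  qed
  have c1: "cond1 u N C c" unfolding cond1_def using cC allc by auto
  have RC: "R = RC"
  proof (rule ccontr)
    assume "R \<noteq> RC" hence RV: "R = RV" by (cases R) auto
    have e: "b(i := None) = (\<lambda>v. None)" unfolding beq by auto
    have vp: "vpick u N C (\<lambda>v. None) l = ?a l" for l unfolding vpick_def W_all_none by simp
    have "(\<Sum>l\<in>N. real (u i (?a l))) = (\<Sum>l\<in>N. real (u i c))" using allc by simp
    hence "EU R u N C (\<lambda>v. None) i = real (u i c)" unfolding RV EU_RV_any vp using n2 by simp
    moreover have "lazy_util R u N C \<epsilon> (b(i:=None)) i \<le> lazy_util R u N C \<epsilon> b i"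
      by (rule pne_dev[OF P iN]) simp
    ultimately show False unfolding lazy_EU e EUb using bi epos by simp
  qed
  show ?thesis using c1 RC beq iN by blast
qed


lemma W2: "card (Wset N C b) \<noteq> 1 \<Longrightarrow> 2 \<le> card (Wset N C b)"
  using W_ne[of b] W_fin[of b] by (cases "card (Wset N C b)") auto

lemma Wm: "card (Wset N C b) \<le> card C"
  by (rule card_mono[OF finC Wset_sub])

lemma nec_allvote:
  assumes P: "is_PNE R u N C \<epsilon> b" and M1: "Max (sc N b ` C) \<noteq> 0" and Wn1: "card (Wset N C b) \<noteq> 1"
  shows "\<forall>l\<in>N. \<exists>c\<in>Wset N C b. b l = Some c"
proof
  fix l assume lN: "l \<in> N"
  let ?W = "Wset N C b" and ?M = "Max (sc N b ` C)"
  have w2: "2 \<le> card ?W" using W2[OF Wn1] .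
  show "\<exists>c\<in>?W. b l = Some c"
  proof (cases "b l")
    case None
    let ?f = "fav u l ?W"
    have fW: "?f \<in> ?W" by (rule fav_prop(1)[OF Wset_sub W_ne lN])
    have fC: "?f \<in> C" using fW Wset_sub[of N C b] by auto
    have ftop: "\<And>d. d \<in> ?W \<Longrightarrow> d \<noteq> ?f \<Longrightarrow> u l d < u l ?f" by (rule fav_prop(2)[OF Wset_sub W_ne lN])
    have fge: "\<And>d. d \<in> ?W \<Longrightarrow> u l d \<le> u l ?f" by (rule fav_ge[OF Wset_sub _ lN])
    obtain d where dW: "d \<in> ?W" "d \<noteq> ?f" using card2_other[OF W_fin w2 fW] by blast
    let ?b' = "b(l := Some ?f)"
    have scu: "\<And>e. sc N ?b' e = sc N b e + (if ?f = e then 1 else 0)"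
      using sc_upd[OF finN lN, of b "Some ?f"] None by simp
    have W': "Wset N C ?b' = {?f}"
    proof (rule Wset_eq[OF finC _ _ _ _, where M="?M + 1"])
      show "{?f} \<subseteq> C" using fC by simp
      show "\<forall>c\<in>{?f}. sc N ?b' c = ?M + 1" using scu W_sc[OF fW] by simp
      show "\<forall>c\<in>C - {?f}. sc N ?b' c < ?M + 1" using scu sc_le[of _ b] by (simp add: le_imp_less_Suc)
    qed simp
    have dv: "lazy_util R u N C \<epsilon> ?b' l \<le> lazy_util R u N C \<epsilon> b l"
      by (rule pne_dev[OF P lN]) (use fC in simp)
    hence dv': "real (u l ?f) \<le> EU R u N C b l + \<epsilon>" unfolding lazy_EU EU_single[OF W'] using None by simp
    have "EU R u N C b l + \<epsilon> < real (u l ?f)"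
    proof (cases R)
      case RC
      have "sum (u l) ?W + 1 \<le> card ?W * u l ?f"
        by (rule sum_le_strict_nat[OF W_fin _ dW(1)]) (use fge ftop dW in auto)
      hence "real (sum (u l) ?W) + 1 \<le> real (card ?W * u l ?f)" by (rule le_real)
      hence s: "(\<Sum>c\<in>?W. real (u l c)) + 1 \<le> real (card ?W) * real (u l ?f)" by simp
      have "1 / real (card C) \<le> 1 / real (card ?W)" using Wm[of b] w2 by (intro divide_left_mono) auto
      hence ew: "\<epsilon> < 1 / real (card ?W)" using em by linarith
      have "(\<Sum>c\<in>?W. real (u l c)) / real (card ?W) + \<epsilon> < real (u l ?f)"
        by (rule avg_strict[OF s _ ew]) (use w2 in simp)
      thus ?thesis unfolding RC EU_RC_any .
    next
      case RV
      obtain y where yN: "y \<in> N" and byd: "b y = Some d"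
        using sc_pos_ex[of N b d] W_sc[OF dW(1)] M1 by auto
      have vy: "vpick u N C b y = d" unfolding vpick_def using byd dW by simp
      have "(\<Sum>j\<in>N. real (u l (vpick u N C b j))) + 1 \<le> real (card N) * real (u l ?f)"
      proof (rule sum_const_bound[OF _ yN])
        show "\<forall>j\<in>N. u l (vpick u N C b j) \<le> u l ?f" using fge vpick_in by blast
        show "u l (vpick u N C b y) < u l ?f" using vy ftop dW by simp
      qed
      hence "(\<Sum>j\<in>N. real (u l (vpick u N C b j))) / real (card N) + \<epsilon> < real (u l ?f)"
        by (rule avg_strict[OF _ _ en]) (use n2 in simp)
      thus ?thesis unfolding RV EU_RV_any .
    qed
    thus ?thesis using dv' by simp
  next
    case (Some d)
    show ?thesis
    proof (cases "d \<in> ?W")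
      case True thus ?thesis using Some by blast
    next
      case False
      have dC: "d \<in> C" using pne_bal(1)[OF P lN] Some by auto
      let ?b' = "b(l := None)"
      have scu: "\<And>e. sc N ?b' e + (if d = e then 1 else 0) = sc N b e"
        using sc_upd[OF finN lN, of b None] Some by simp
      have W': "Wset N C ?b' = ?W"
      proof (rule Wset_eq[OF finC Wset_sub W_ne, where M="?M"])
        show "\<forall>c\<in>?W. sc N ?b' c = ?M"
        proof
          fix c assume cW: "c \<in> ?W"
          hence "d \<noteq> c" using False by auto
          thus "sc N ?b' c = ?M" using scu[of c] W_sc[OF cW] by simp
        qed
        show "\<forall>c\<in>C - ?W. sc N ?b' c < ?M"
        proof
          fix c assume "c \<in> C - ?W"
          hence "sc N b c < ?M" using notW_sc by auto
          moreover have "sc N ?b' c \<le> sc N b c" using scu[of c] by linarith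
          ultimately show "sc N ?b' c < ?M" by linarith
        qed
      qed
      have same: "EU R u N C ?b' l = EU R u N C b l"
      proof (cases R)
        case RC thus ?thesis unfolding RC EU_RC_any W' by simp
      next
        case RV
        have "vpick u N C ?b' j = vpick u N C b j" for j
          unfolding vpick_def W' using Some False by (cases "j = l") auto
        thus ?thesis unfolding RV EU_RV_any by simp
      qed
      have "lazy_util R u N C \<epsilon> ?b' l \<le> lazy_util R u N C \<epsilon> b l"
        by (rule pne_dev[OF P lN]) simp
      thus ?thesis unfolding lazy_EU same using Some epos by simp
    qed
  qed
qed


lemma nec_tie:
  assumes P: "is_PNE R u N C \<epsilon> b" and M1: "Max (sc N b ` C) \<noteq> 0" and Wn1: "card (Wset N C b) \<noteq> 1"
  shows "(cond2 u N C \<and> b = (\<lambda>v. if v \<in> N then Some (fav u v C) else None))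
        \<or> (\<exists>X. cond3 u N C X \<and> b = (\<lambda>v. if v \<in> N then Some (fav u v X) else None))"
proof -
  let ?W = "Wset N C b" and ?M = "Max (sc N b ` C)"
  have w2: "2 \<le> card ?W" using W2[OF Wn1] .
  have AV: "\<forall>l\<in>N. \<exists>c\<in>?W. b l = Some c" by (rule nec_allvote[OF P M1 Wn1])
  define g where "g = (\<lambda>l. the (b l))"
  have gb: "b l = Some (g l)" "g l \<in> ?W" if "l \<in> N" for l
    using AV that unfolding g_def by auto
  have gC: "g l \<in> C" if "l \<in> N" for l using gb(2)[OF that] Wset_sub[of N C b] by auto
  have bout: "b v = None" if "v \<notin> N" for v using pne_bal(2)[OF P that] .
  have EUb: "EU R u N C b i = (\<Sum>l\<in>N. real (u i (g l))) / real (card N)" for i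
    by (rule EU_allvote) (use gb in auto)
  have Lb: "lazy_util R u N C \<epsilon> b i = (\<Sum>l\<in>N. real (u i (g l))) / real (card N)" if "i \<in> N" for i
    unfolding lazy_EU EUb using gb(1)[OF that] by simp
  have fib: "card {l\<in>N. g l = c} = ?M" if "c \<in> ?W" for c
  proof -
    have "{l\<in>N. g l = c} = {l\<in>N. b l = Some c}" using gb by auto
    thus ?thesis using W_sc[OF that] unfolding sc_def by simp
  qed
  have gW: "\<forall>l\<in>N. g l \<in> ?W" using gb by auto
  have nMw: "card N = ?M * card ?W"
  proof -
    have "(\<Sum>l\<in>N. (\<lambda>c. 1::real) (g l)) = (\<Sum>c\<in>?W. real (card {l\<in>N. g l = c}) * 1)"
      by (rule fiber_sum[OF finN W_fin gW])
    also have "\<dots> = (\<Sum>c\<in>?W. real ?M)" by (rule sum.cong) (simp_all add: fib)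
    finally have "real (card N) = real (?M * card ?W)" by simp
    thus ?thesis by (simp only: of_nat_eq_iff)
  qed
  have GP: "(\<Sum>j\<in>N. real (u i (g j))) / real (card N) = (\<Sum>c\<in>?W. real (u i c)) / real (card ?W)" for i
  proof -
    have "(\<Sum>j\<in>N. real (u i (g j))) = (\<Sum>c\<in>?W. real (card {l\<in>N. g l = c}) * real (u i c))"
      by (rule fiber_sum[OF finN W_fin gW])
    also have "\<dots> = real ?M * (\<Sum>c\<in>?W. real (u i c))"
      by (simp add: fib sum_distrib_left)
    finally show ?thesis using nMw M1 by simp
  qed
  \<comment> \<open>switching to another winner is not profitable\<close>
  have star: "real (u i d) \<le> (\<Sum>l\<in>N. real (u i (g l))) / real (card N)"
    if iN: "i \<in> N" and dW: "d \<in> ?W" and dg: "d \<noteq> g i" for i d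
  proof -
    have dC: "d \<in> C" using dW Wset_sub[of N C b] by auto
    let ?b' = "b(i := Some d)"
    have scu: "\<And>e. sc N ?b' e + (if g i = e then 1 else 0) = sc N b e + (if d = e then 1 else 0)"
      using sc_upd[OF finN iN, of b "Some d"] gb(1)[OF iN] by simp
    have W': "Wset N C ?b' = {d}"
    proof (rule Wset_eq[OF finC _ _ _ _, where M="?M + 1"])
      show "{d} \<subseteq> C" using dC by simp
      show "\<forall>c\<in>{d}. sc N ?b' c = ?M + 1" using scu[of d] dg W_sc[OF dW] by simp
      show "\<forall>c\<in>C - {d}. sc N ?b' c < ?M + 1"
      proof
        fix c assume c: "c \<in> C - {d}"
        have "sc N ?b' c \<le> sc N b c" using scu[of c] c by auto
        thus "sc N ?b' c < ?M + 1" using sc_le[of c b] c by simp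
      qed
    qed simp
    have "lazy_util R u N C \<epsilon> ?b' i \<le> lazy_util R u N C \<epsilon> b i"
      by (rule pne_dev[OF P iN]) (use dC in simp)
    thus ?thesis unfolding Lb[OF iN] unfolding lazy_EU EU_single[OF W'] by simp
  qed
  have favW: "fav u i ?W = g i" if iN: "i \<in> N" for i
  proof (rule ccontr)
    let ?f = "fav u i ?W"
    assume ne: "?f \<noteq> g i"
    have fW: "?f \<in> ?W" by (rule fav_prop(1)[OF Wset_sub W_ne iN])
    have "(\<Sum>l\<in>N. real (u i (g l))) + 1 \<le> real (card N) * real (u i ?f)"
    proof (rule sum_const_bound[OF _ iN])
      show "\<forall>l\<in>N. u i (g l) \<le> u i ?f" using fav_ge[OF Wset_sub _ iN] gW by blast
      show "u i (g i) < u i ?f" using fav_prop(2)[OF Wset_sub W_ne iN gb(2)[OF iN]] ne by metis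
    qed
    hence "(\<Sum>l\<in>N. real (u i (g l))) / real (card N) + 0 < real (u i ?f)"
      by (rule avg_strict) (use n2 in simp_all)
    thus False using star[OF iN fW ne] by simp
  qed
  have pref: "u i c < u i (g i)" if iN: "i \<in> N" and c: "c \<in> ?W - {g i}" for i c
  proof -
    have "c \<in> ?W" "c \<noteq> fav u i ?W" using c favW[OF iN] by auto
    from fav_prop(2)[OF Wset_sub[of N C b] W_ne[of b] iN this] show ?thesis using favW[OF iN] by simp
  qed
  show ?thesis
  proof (cases "?M = 1")
    case False
    hence M2: "2 \<le> ?M" using M1 by simp
    have "cond3 u N C ?W" unfolding cond3_def
    proof (intro conjI exI[of _ g])
      show "?W \<subseteq> C" by (rule Wset_sub)
      show "2 \<le> card ?W" by (rule w2)
      show "2 * card ?W \<le> card N" using nMw M2 by simp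
      show "card ?W \<le> card C" by (rule Wm)
      show "\<forall>i\<in>N. g i \<in> ?W" by (rule gW)
      show "\<forall>c\<in>?W. card {i \<in> N. g i = c} * card ?W = card N" using fib nMw by simp
      show "\<forall>i\<in>N. \<forall>c\<in>?W - {g i}. u i c < u i (g i)" using pref by blast
      show "\<forall>i\<in>N. real (Max (u i ` (?W - {g i}))) \<le> real (\<Sum>c\<in>?W. u i c) / real (card ?W)"
      proof
        fix i assume iN: "i \<in> N"
        obtain d where dW: "d \<in> ?W" "d \<noteq> g i" using card2_other[OF W_fin w2 gb(2)[OF iN]] by blast
        have ne: "u i ` (?W - {g i}) \<noteq> {}" using dW by auto
        have "Max (u i ` (?W - {g i})) \<in> u i ` (?W - {g i})" using Max_in[OF _ ne] W_fin by simp
        then obtain d' where d': "d' \<in> ?W - {g i}" "Max (u i ` (?W - {g i})) = u i d'" by auto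
        have "real (u i d') \<le> (\<Sum>c\<in>?W. real (u i c)) / real (card ?W)"
          using star[OF iN, of d'] d'(1) GP[of i] by simp
        thus "real (Max (u i ` (?W - {g i}))) \<le> real (\<Sum>c\<in>?W. u i c) / real (card ?W)"
          using d'(2) by simp
      qed
    qed
    moreover have "b = (\<lambda>v. if v \<in> N then Some (fav u v ?W) else None)"
    proof
      fix v show "b v = (if v \<in> N then Some (fav u v ?W) else None)"
        using gb(1)[of v] favW[of v] bout[of v] by auto
    qed
    ultimately show ?thesis by blast
  next
    case True
    have injg: "inj_on g N"
    proof (rule inj_onI)
      fix x y assume x: "x \<in> N" and y: "y \<in> N" and e: "g x = g y"
      have "card {l\<in>N. g l = g x} = 1" using fib[OF gb(2)[OF x]] True by simp
      then obtain z where z: "{l\<in>N. g l = g x} = {z}" by (rule card_1_singletonE)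
      have "x \<in> {l\<in>N. g l = g x}" "y \<in> {l\<in>N. g l = g x}" using x y e by auto
      thus "x = y" using z by auto
    qed
    have ga: "g i = fav u i C" if iN: "i \<in> N" for i
    proof (rule ccontr)
      let ?a = "fav u i C"
      assume ne: "g i \<noteq> ?a"
      have aC: "?a \<in> C" by (rule fav_C(1)[OF iN])
      have lt: "u i (g i) < u i ?a" using fav_C(2)[OF iN gC[OF iN]] ne by simp
      have aW: "?a \<notin> ?W"
      proof
        assume "?a \<in> ?W"
        hence "u i ?a < u i (g i)" using pref[OF iN] ne by auto
        thus False using lt by simp
      qed
      have sca: "sc N b ?a = 0" using notW_sc[OF aC aW] True by simp
      let ?b' = "b(i := Some ?a)" and ?h = "g(i := ?a)"
      have scu: "\<And>e. sc N ?b' e + (if g i = e then 1 else 0) = sc N b e + (if ?a = e then 1 else 0)"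
        using sc_upd[OF finN iN, of b "Some ?a"] gb(1)[OF iN] by simp
      have W': "Wset N C ?b' = insert ?a (?W - {g i})"
      proof (rule Wset_eq[OF finC _ _ _ _, where M=1])
        show "insert ?a (?W - {g i}) \<subseteq> C" using aC Wset_sub[of N C b] by auto
        show "\<forall>c\<in>insert ?a (?W - {g i}). sc N ?b' c = 1"
        proof
          fix c assume c: "c \<in> insert ?a (?W - {g i})"
          show "sc N ?b' c = 1"
          proof (cases "c = ?a")
            case True thus ?thesis using scu[of c] sca ne by simp
          next
            case False
            hence "c \<in> ?W" "c \<noteq> g i" using c by auto
            thus ?thesis using scu[of c] W_sc[of c b] \<open>?M = 1\<close> False by simp
          qed
        qed
        show "\<forall>c\<in>C - insert ?a (?W - {g i}). sc N ?b' c < 1"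
        proof
          fix c assume c: "c \<in> C - insert ?a (?W - {g i})"
          show "sc N ?b' c < 1"
          proof (cases "c = g i")
            case True thus ?thesis using scu[of c] W_sc[OF gb(2)[OF iN]] \<open>?M = 1\<close> ne by simp
          next
            case False
            hence "c \<notin> ?W" "c \<noteq> ?a" using c by auto
            thus ?thesis using scu[of c] notW_sc[of c b] \<open>?M = 1\<close> c False by simp
          qed
        qed
      qed simp
      have EU': "EU R u N C ?b' i = (\<Sum>l\<in>N. real (u i (?h l))) / real (card N)"
      proof (rule EU_allvote)
        show "\<forall>l\<in>N. ?b' l = Some (?h l) \<and> ?h l \<in> Wset N C ?b'"
        proof
          fix l assume lN: "l \<in> N"
          show "?b' l = Some (?h l) \<and> ?h l \<in> Wset N C ?b'"
          proof (cases "l = i")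
            case False
            have "g l \<noteq> g i" using injg lN iN False unfolding inj_on_def by auto
            thus ?thesis using False gb[OF lN] W' by simp
          qed (simp add: W')
        qed
      qed
      have "(\<Sum>l\<in>N. real (u i (g l))) + 1 \<le> (\<Sum>l\<in>N. real (u i (?h l)))"
        by (rule sum_strict1[OF finN iN]) (use lt in auto)
      hence "(\<Sum>l\<in>N. real (u i (g l))) / real (card N) < EU R u N C ?b' i"
        unfolding EU' using n2 by (simp add: divide_strict_right_mono)
      moreover have "lazy_util R u N C \<epsilon> ?b' i \<le> lazy_util R u N C \<epsilon> b i"
        by (rule pne_dev[OF P iN]) (use aC in simp)
      ultimately show False unfolding Lb[OF iN] unfolding lazy_EU by simp
    qed
    have "cond2 u N C" unfolding cond2_def
    proof (intro conjI ballI)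
      show "inj_on (\<lambda>i. fav u i C) N" using injg ga by (metis (mono_tags, lifting) inj_on_cong)
      fix l assume lN: "l \<in> N"
      have Nl: "N - {l} \<noteq> {}"
      proof
        assume "N - {l} = {}" hence "N \<subseteq> {l}" by auto
        hence "card N \<le> card {l}" by (rule card_mono[rotated]) simp
        thus False using n2 by simp
      qed
      have ne: "(\<lambda>i. u l (fav u i C)) ` (N - {l}) \<noteq> {}" using Nl by auto
      have "Max ((\<lambda>i. u l (fav u i C)) ` (N - {l})) \<in> (\<lambda>i. u l (fav u i C)) ` (N - {l})"
        using Max_in[OF _ ne] finN by simp
      then obtain i0 where i0: "i0 \<in> N - {l}" "Max ((\<lambda>i. u l (fav u i C)) ` (N - {l})) = u l (fav u i0 C)" by auto
      have i0N: "i0 \<in> N" using i0 by auto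
      have "g i0 \<noteq> g l" using injg i0 lN unfolding inj_on_def by auto
      hence "real (u l (g i0)) \<le> (\<Sum>j\<in>N. real (u l (g j))) / real (card N)"
        using star[OF lN gb(2)[OF i0N]] by simp
      moreover have "(\<Sum>j\<in>N. real (u l (g j))) = real (\<Sum>j\<in>N. u l (fav u j C))"
        using ga by simp
      ultimately show "real (Max ((\<lambda>i. u l (fav u i C)) ` (N - {l}))) \<le> real (\<Sum>i\<in>N. u l (fav u i C)) / real (card N)"
        using i0(2) ga[OF i0N] by simp
    qed
    moreover have "b = (\<lambda>v. if v \<in> N then Some (fav u v C) else None)"
    proof
      fix v show "b v = (if v \<in> N then Some (fav u v C) else None)"
        using gb(1)[of v] ga[of v] bout[of v] by auto
    qed
    ultimately show ?thesis by blast
  qed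
qed


lemma nec:
  assumes P: "is_PNE R u N C \<epsilon> b"
  shows "(\<exists>c. cond1 u N C c \<and>
               ((R = RC \<and> (\<exists>i\<in>N. b = (\<lambda>v. if v = i then Some c else None)))
              \<or> (R = RV \<and> b = (\<lambda>v. None))))
        \<or> (cond2 u N C \<and> b = (\<lambda>v. if v \<in> N then Some (fav u v C) else None))
        \<or> (\<exists>X. cond3 u N C X \<and> b = (\<lambda>v. if v \<in> N then Some (fav u v X) else None))"
proof (cases "Max (sc N b ` C) = 0")
  case True thus ?thesis using nec_M0[OF P True] by blast
next
  case False
  show ?thesis
  proof (cases "card (Wset N C b) = 1")
    case True
    then obtain c where "Wset N C b = {c}" by (rule card_1_singletonE)
    thus ?thesis using nec_single[OF P False] by blast
  next
    case Wn: False
    thus ?thesis using nec_tie[OF P False Wn] by blast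
  qed
qed

lemma main:
  shows "((\<exists>b. is_PNE R u N C \<epsilon> b) \<longleftrightarrow>
            ((\<exists>c. cond1 u N C c) \<or> cond2 u N C \<or> (\<exists>X. cond3 u N C X)))
    \<and> (\<forall>c. cond1 u N C c \<longrightarrow>
          (R = RC \<longrightarrow> (\<forall>i\<in>N. is_PNE R u N C \<epsilon> (\<lambda>v. if v = i then Some c else None)))
        \<and> (R = RV \<longrightarrow> is_PNE R u N C \<epsilon> (\<lambda>v. None)))
    \<and> (cond2 u N C \<longrightarrow> is_PNE R u N C \<epsilon> (\<lambda>v. if v \<in> N then Some (fav u v C) else None))
    \<and> (\<forall>X. cond3 u N C X \<longrightarrow> is_PNE R u N C \<epsilon> (\<lambda>v. if v \<in> N then Some (fav u v X) else None))
    \<and> (\<forall>b. is_PNE R u N C \<epsilon> b \<longrightarrow>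
          ((\<exists>c. cond1 u N C c \<and>
               ((R = RC \<and> (\<exists>i\<in>N. b = (\<lambda>v. if v = i then Some c else None)))
              \<or> (R = RV \<and> b = (\<lambda>v. None)))))
        \<or> (cond2 u N C \<and> b = (\<lambda>v. if v \<in> N then Some (fav u v C) else None))
        \<or> (\<exists>X. cond3 u N C X \<and> b = (\<lambda>v. if v \<in> N then Some (fav u v X) else None)))"
proof -
  have s1: "\<forall>c. cond1 u N C c \<longrightarrow>
          (R = RC \<longrightarrow> (\<forall>i\<in>N. is_PNE R u N C \<epsilon> (\<lambda>v. if v = i then Some c else None)))
        \<and> (R = RV \<longrightarrow> is_PNE R u N C \<epsilon> (\<lambda>v. None))"
    using suff1 suff2 by blast
  have s3: "cond2 u N C \<longrightarrow> is_PNE R u N C \<epsilon> (\<lambda>v. if v \<in> N then Some (fav u v C) else None)"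
    using suff3 by blast
  have s4: "\<forall>X. cond3 u N C X \<longrightarrow> is_PNE R u N C \<epsilon> (\<lambda>v. if v \<in> N then Some (fav u v X) else None)"
    using suff4 by blast
  have nc: "\<forall>b. is_PNE R u N C \<epsilon> b \<longrightarrow>
          ((\<exists>c. cond1 u N C c \<and>
               ((R = RC \<and> (\<exists>i\<in>N. b = (\<lambda>v. if v = i then Some c else None)))
              \<or> (R = RV \<and> b = (\<lambda>v. None)))))
        \<or> (cond2 u N C \<and> b = (\<lambda>v. if v \<in> N then Some (fav u v C) else None))
        \<or> (\<exists>X. cond3 u N C X \<and> b = (\<lambda>v. if v \<in> N then Some (fav u v X) else None))"
    using nec by blast
  have iff: "(\<exists>b. is_PNE R u N C \<epsilon> b) \<longleftrightarrow>
            ((\<exists>c. cond1 u N C c) \<or> cond2 u N C \<or> (\<exists>X. cond3 u N C X))"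
  proof
    assume "\<exists>b. is_PNE R u N C \<epsilon> b"
    then obtain b where "is_PNE R u N C \<epsilon> b" by blast
    thus "(\<exists>c. cond1 u N C c) \<or> cond2 u N C \<or> (\<exists>X. cond3 u N C X)" using nc by blast
  next
    assume "(\<exists>c. cond1 u N C c) \<or> cond2 u N C \<or> (\<exists>X. cond3 u N C X)"
    moreover obtain i0 where "i0 \<in> N" using Nne by auto
    ultimately show "\<exists>b. is_PNE R u N C \<epsilon> b" using s1 s3 s4 by (cases R) blast+
  qed
  show ?thesis using iff s1 s3 s4 nc by blast
qed

end

theorem theorem2:
  fixes N :: "'v set" and C :: "'c set" and u :: "'v \<Rightarrow> 'c \<Rightarrow> nat"
    and R :: rule and \<epsilon> :: real
  assumes "finite N" and "finite C" and "card N \<ge> 2" and "card C \<ge> 2"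
    and "\<forall>i\<in>N. inj_on (u i) C"
    and "0 < \<epsilon>" and "\<epsilon> < 1 / real (card C)" and "\<epsilon> < 1 / real (card N)"
  shows "((\<exists>b. is_PNE R u N C \<epsilon> b) \<longleftrightarrow>
            ((\<exists>c. cond1 u N C c) \<or> cond2 u N C \<or> (\<exists>X. cond3 u N C X)))
    \<and> (\<forall>c. cond1 u N C c \<longrightarrow>
          (R = RC \<longrightarrow> (\<forall>i\<in>N. is_PNE R u N C \<epsilon> (\<lambda>v. if v = i then Some c else None)))
        \<and> (R = RV \<longrightarrow> is_PNE R u N C \<epsilon> (\<lambda>v. None)))
    \<and> (cond2 u N C \<longrightarrow> is_PNE R u N C \<epsilon> (\<lambda>v. if v \<in> N then Some (fav u v C) else None))
    \<and> (\<forall>X. cond3 u N C X \<longrightarrow> is_PNE R u N C \<epsilon> (\<lambda>v. if v \<in> N then Some (fav u v X) else None))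
    \<and> (\<forall>b. is_PNE R u N C \<epsilon> b \<longrightarrow>
          ((\<exists>c. cond1 u N C c \<and>
               ((R = RC \<and> (\<exists>i\<in>N. b = (\<lambda>v. if v = i then Some c else None)))
              \<or> (R = RV \<and> b = (\<lambda>v. None)))))
        \<or> (cond2 u N C \<and> b = (\<lambda>v. if v \<in> N then Some (fav u v C) else None))
        \<or> (\<exists>X. cond3 u N C X \<and> b = (\<lambda>v. if v \<in> N then Some (fav u v X) else None)))"
proof -
  interpret vs N C u \<epsilon> by (unfold_locales; fact assms)
  show ?thesis by (rule main)
qed


end
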